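(* For all integers $n\ge0$, $nov(n)=\frac12\overline{M}_2(n)$ and $ov(n)=\frac12\overline{M}_2(n)-\overline{M2}_2(n)$.
   Context: An overpartition of $n$ is a partition of $n$ in which the first occurrence of each distinct part may be overlined. $nov(n)$ (resp. $ov(n)$) is the sum, over all overpartitions of $n$, of the non-overlined (resp. overlined) parts. With $(a;q)_\infty=\prod_{j\ge0}(1-aq^j)$, define $\overline{M}(m,n)$, $\overline{M2}(m,n)$ by $\sum_{m,n}\overline{M}(m,n)z^mq^n=\frac{(q^2;q^2)_\infty}{(zq;q)_\infty(q/z;q)_\infty}$ and $\sum_{m,n}\overline{M2}(m,n)z^mq^n=\frac{(-q;q)_\infty(q^2;q^2)_\infty}{(q;q^2)_\infty(zq^2;q^2)_\infty(q^2/z;q^2)_\infty}$ (first and second residual crank counts), and $\overline{M}_2(n)=\sum_m m^2\overline{M}(m,n)$, $\overline{M2}_2(n)=\sum_m m^2\overline{M2}(m,n)$. *)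

theory Defs
  imports "HOL-Computational_Algebra.Computational_Algebra" "HOL-Library.Multiset"
begin

text \<open>Overpartitions of n: a multiset of positive parts summing to n, together with the
  set of part sizes whose first occurrence is overlined.\<close>
definition overpartitions :: "nat \<Rightarrow> (nat multiset \<times> nat set) set" where
  "overpartitions n = {(p, S). (\<forall>x\<in>#p. 0 < x) \<and> sum_mset p = n \<and> S \<subseteq> set_mset p}"

definition ov :: "nat \<Rightarrow> nat" where
  "ov n = (\<Sum>(p, S)\<in>overpartitions n. \<Sum>S)"

definition nov :: "nat \<Rightarrow> nat" where
  "nov n = (\<Sum>(p, S)\<in>overpartitions n. sum_mset p - \<Sum>S)"

text \<open>Two-variable generating functions: formal power series in q whose coefficients are
  formal Laurent series in z (over the rationals).\<close>
type_synonym gf = "rat fls fps"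

definition fps_infprod :: "(nat \<Rightarrow> 'a::comm_ring_1 fps) \<Rightarrow> 'a fps" where
  "fps_infprod f = lim (\<lambda>N. \<Prod>j<N. f j)"

definition qpoch_inf :: "gf \<Rightarrow> nat \<Rightarrow> gf" where
  "qpoch_inf a s = fps_infprod (\<lambda>j. 1 - a * fps_X ^ (s * j))"

definition zvar :: gf where "zvar = fps_const fls_X"

definition GF_M :: gf where
  "GF_M = qpoch_inf (fps_X\<^sup>2) 2 /
     (qpoch_inf (zvar * fps_X) 1 * qpoch_inf (inverse zvar * fps_X) 1)"

definition GF_M2 :: gf where
  "GF_M2 = qpoch_inf (- fps_X) 1 * qpoch_inf (fps_X\<^sup>2) 2 /
     (qpoch_inf fps_X 2 * qpoch_inf (zvar * fps_X\<^sup>2) 2 * qpoch_inf (inverse zvar * fps_X\<^sup>2) 2)"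

definition Mbar :: "int \<Rightarrow> nat \<Rightarrow> rat" where
  "Mbar m n = fls_nth (fps_nth GF_M n) m"

definition M2bar :: "int \<Rightarrow> nat \<Rightarrow> rat" where
  "M2bar m n = fls_nth (fps_nth GF_M2 n) m"

definition Mbar_2 :: "nat \<Rightarrow> rat" where
  "Mbar_2 n = (\<Sum>m | Mbar m n \<noteq> 0. of_int m ^ 2 * Mbar m n)"

definition M2bar_2 :: "nat \<Rightarrow> rat" where
  "M2bar_2 n = (\<Sum>m | M2bar m n \<noteq> 0. of_int m ^ 2 * M2bar m n)"

end

theory Submission
  imports Defs
begin
unbundle fps_syntax

lemma prod_nth_stable_step:
  fixes P f :: "'a::comm_ring_1 fps"
  assumes "f $ 0 = 1" "\<And>i. 0 < i \<Longrightarrow> i \<le> k \<Longrightarrow> f $ i = 0"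
  shows "(P * f) $ k = P $ k"
proof -
  have "(P * f) $ k = (\<Sum>i=0..k. P$i * f$(k - i))" by (rule fps_mult_nth)
  also have "\<dots> = (\<Sum>i\<in>{k}. P$i * f$(k - i))"
    by (rule sum.mono_neutral_right) (use assms in auto)
  finally show ?thesis using assms by simp
qed

lemma prod_nth_stable:
  fixes f :: "nat \<Rightarrow> 'a::comm_ring_1 fps"
  assumes "\<And>j. f j $ 0 = 1" "\<And>j i. 0 < i \<Longrightarrow> i \<le> j \<Longrightarrow> f j $ i = 0"
  assumes "k < N"
  shows "(\<Prod>j<N. f j) $ k = (\<Prod>j<Suc k. f j) $ k"
  using assms(3)
proof (induction N)
  case 0 then show ?case by simp
next
  case (Suc N)
  show ?case
  proof (cases "k < N")
    case True
    have "(\<Prod>j<Suc N. f j) $ k = ((\<Prod>j<N. f j) * f N) $ k" by simp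
    also have "\<dots> = (\<Prod>j<N. f j) $ k"
      by (rule prod_nth_stable_step) (use assms True in auto)
    finally show ?thesis using Suc True by simp
  next
    case False
    then have "N = k" using Suc by simp
    then show ?thesis by simp
  qed
qed

lemma infprod_nth:
  fixes f :: "nat \<Rightarrow> 'a::comm_ring_1 fps"
  assumes "\<And>j. f j $ 0 = 1" "\<And>j i. 0 < i \<Longrightarrow> i \<le> j \<Longrightarrow> f j $ i = 0"
  assumes "k < N"
  shows "fps_infprod f $ k = (\<Prod>j<N. f j) $ k"
proof -
  define L where "L = Abs_fps (\<lambda>k. (\<Prod>j<Suc k. f j) $ k)"
  have "(\<lambda>N. \<Prod>j<N. f j) \<longlonglongrightarrow> L"
  proof (rule tendsto_fpsI)
    fix k
    show "eventually (\<lambda>N. (\<Prod>j<N. f j) $ k = L $ k) sequentially"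
      using eventually_gt_at_top[of k]
      by eventually_elim (simp add: L_def prod_nth_stable[OF assms(1,2)])
  qed
  then have "fps_infprod f = L" unfolding fps_infprod_def by (rule limI)
  then show ?thesis using prod_nth_stable[OF assms] by (simp add: L_def)
qed

lemma qpoch_nth:
  fixes a :: gf
  assumes "a $ 0 = 0" "0 < s" "k < N"
  shows "qpoch_inf a s $ k = (\<Prod>j<N. 1 - a * fps_X ^ (s * j)) $ k"
  unfolding qpoch_inf_def
proof (rule infprod_nth[OF _ _ assms(3)])
  fix j show "(1 - a * fps_X ^ (s * j)) $ 0 = 1"
    using assms by (simp add: fps_X_power_mult_right_nth)
next
  fix j i :: nat assume "0 < i" "i \<le> j"
  then show "(1 - a * fps_X ^ (s * j)) $ i = 0"
  proof (cases "i < s * j")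
    case False
    then have "s * j \<le> i" by simp
    moreover have "j \<le> s * j" using assms(2) by simp
    ultimately have "i = s * j" using \<open>i \<le> j\<close> by linarith
    then show ?thesis using assms(1) \<open>0 < i\<close> by (simp add: fps_X_power_mult_right_nth)
  qed (use \<open>0 < i\<close> in \<open>simp add: fps_X_power_mult_right_nth\<close>)
qed

definition eqn :: "nat \<Rightarrow> 'a::comm_ring_1 fps \<Rightarrow> 'a fps \<Rightarrow> bool" where
  "eqn n f g \<longleftrightarrow> (\<forall>k\<le>n. f $ k = g $ k)"

lemma eqn_refl [simp]: "eqn n f f" by (simp add: eqn_def)
lemma eqn_sym: "eqn n f g \<Longrightarrow> eqn n g f" by (simp add: eqn_def)
lemma eqn_trans: "eqn n f g \<Longrightarrow> eqn n g h \<Longrightarrow> eqn n f h" by (simp add: eqn_def)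
lemma eqn_eq: "f = g \<Longrightarrow> eqn n f g" by simp
lemma eqn_add: "eqn n f f' \<Longrightarrow> eqn n g g' \<Longrightarrow> eqn n (f + g) (f' + g')" by (simp add: eqn_def)
lemma eqn_diff: "eqn n f f' \<Longrightarrow> eqn n g g' \<Longrightarrow> eqn n (f - g) (f' - g')" by (simp add: eqn_def)
lemma eqn_mult:
  assumes "eqn n f f'" "eqn n g g'"
  shows "eqn n (f * g) (f' * g')"
  unfolding eqn_def
proof (intro allI impI)
  fix k assume "k \<le> n"
  then show "(f * g) $ k = (f' * g') $ k"
    using assms by (auto simp: eqn_def fps_mult_nth intro!: sum.cong)
qed
lemma eqn_sum: "(\<And>i. i \<in> A \<Longrightarrow> eqn n (f i) (g i)) \<Longrightarrow> eqn n (\<Sum>i\<in>A. f i) (\<Sum>i\<in>A. g i)"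
  by (induction A rule: infinite_finite_induct) (auto intro: eqn_add)

lemma eqn_inverse:
  fixes f g :: "'a::field fps"
  assumes "eqn n f g" "f $ 0 \<noteq> 0"
  shows "eqn n (inverse f) (inverse g)"
proof -
  have g0: "g $ 0 \<noteq> 0" using assms by (auto simp: eqn_def)
  have "inverse f = inverse f * (g * inverse g)" using g0 by (simp add: inverse_mult_eq_1')
  also have "\<dots> = (inverse f * g) * inverse g" by (simp add: mult.assoc)
  finally have e: "inverse f = (inverse f * g) * inverse g" .
  have "eqn n ((inverse f * g) * inverse g) ((inverse f * f) * inverse g)"
    by (intro eqn_mult eqn_sym[OF assms(1)] eqn_refl)
  then show ?thesis using e assms(2) by (simp add: inverse_mult_eq_1)
qed

lemma eqn_div:
  fixes a a' b b' :: "'a::field fps"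
  assumes "eqn n a a'" "eqn n b b'" "b' $ 0 \<noteq> 0"
  shows "eqn n (a / b) (a' / b')"
proof -
  have "b $ 0 \<noteq> 0" using assms by (auto simp: eqn_def)
  then show ?thesis using assms
    by (simp add: fps_divide_unit eqn_mult eqn_inverse)
qed

lemma eqn_cancel:
  fixes f g h :: "'a::field fps"
  assumes "eqn n (f * h) (g * h)" "h $ 0 \<noteq> 0"
  shows "eqn n f g"
proof -
  have "eqn n (f * h * inverse h) (g * h * inverse h)" by (rule eqn_mult[OF assms(1) eqn_refl])
  then show ?thesis using assms(2) by (simp add: mult.assoc inverse_mult_eq_1')
qed

lemma prod_nth_0: "(\<Prod>j\<in>A. f j) $ 0 = (\<Prod>j\<in>A. f j $ 0)"
  by (induction A rule: infinite_finite_induct) auto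

lemma prod_stable_eqn:
  fixes f :: "nat \<Rightarrow> 'a::comm_ring_1 fps"
  assumes "\<And>j. f j $ 0 = 1" "\<And>j i. 0 < i \<Longrightarrow> i \<le> j \<Longrightarrow> f j $ i = 0"
  assumes "n < N" "n < M"
  shows "eqn n (\<Prod>j<N. f j) (\<Prod>j<M. f j)"
  unfolding eqn_def using prod_nth_stable[OF assms(1,2)] assms(3,4) by auto

lemma qpoch_eqn:
  fixes a :: gf
  assumes "a $ 0 = 0" "0 < s" "n < N"
  shows "eqn n (qpoch_inf a s) (\<Prod>j<N. 1 - a * fps_X ^ (s * j))"
  unfolding eqn_def using qpoch_nth[OF assms(1,2)] assms(3) by auto


definition Tz :: "rat fls \<Rightarrow> rat fls" where "Tz f = fls_X * fls_deriv f"

lemma Tz_nth [simp]: "Tz f $$ m = of_int m * f $$ m"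
  by (simp add: Tz_def fls_X_times_conv_shift)

lemma Tz_add [simp]: "Tz (f + g) = Tz f + Tz g"
  by (rule fls_eqI) (simp add: algebra_simps)
lemma Tz_diff [simp]: "Tz (f - g) = Tz f - Tz g"
  by (rule fls_eqI) (simp add: algebra_simps)
lemma Tz_uminus [simp]: "Tz (- f) = - Tz f"
  by (rule fls_eqI) (simp add: algebra_simps)
lemma Tz_zero [simp]: "Tz 0 = 0"
  by (rule fls_eqI) simp
lemma Tz_one [simp]: "Tz 1 = 0"
  by (rule fls_eqI) simp
lemma Tz_const [simp]: "Tz (fls_const c) = 0"
  by (rule fls_eqI) simp
lemma Tz_X [simp]: "Tz fls_X = fls_X"
  by (rule fls_eqI) simp
lemma Tz_X_inv [simp]: "Tz fls_X_inv = - fls_X_inv"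
  by (rule fls_eqI) simp
lemma Tz_mult: "Tz (f * g) = Tz f * g + f * Tz g"
  by (simp add: Tz_def algebra_simps)
lemma Tz_sum: "Tz (\<Sum>i\<in>A. f i) = (\<Sum>i\<in>A. Tz (f i))"
  by (induction A rule: infinite_finite_induct) auto

definition supp :: "rat fls \<Rightarrow> int set" where "supp f = {m. f $$ m \<noteq> 0}"
definition finf :: "rat fls \<Rightarrow> bool" where "finf f \<longleftrightarrow> finite (supp f)"
definition Ez :: "rat fls \<Rightarrow> rat" where "Ez f = (\<Sum>m\<in>supp f. f $$ m)"

lemma Ez_eq: "finite S \<Longrightarrow> supp f \<subseteq> S \<Longrightarrow> Ez f = (\<Sum>m\<in>S. f $$ m)"
  unfolding Ez_def by (rule sum.mono_neutral_left) (auto simp: supp_def)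

lemma finf_subset: "finite S \<Longrightarrow> supp f \<subseteq> S \<Longrightarrow> finf f"
  unfolding finf_def using finite_subset by blast

lemma finf_add [simp]: "finf f \<Longrightarrow> finf g \<Longrightarrow> finf (f + g)"
  unfolding finf_def by (rule finite_subset[of _ "supp f \<union> supp g"]) (auto simp: supp_def)
lemma finf_uminus [simp]: "finf f \<Longrightarrow> finf (- f)"
  unfolding finf_def by (simp add: supp_def)
lemma finf_diff [simp]: "finf f \<Longrightarrow> finf g \<Longrightarrow> finf (f - g)"
  unfolding finf_def by (rule finite_subset[of _ "supp f \<union> supp g"]) (auto simp: supp_def)
lemma finf_Tz [simp]: "finf f \<Longrightarrow> finf (Tz f)"
  unfolding finf_def by (rule finite_subset[of _ "supp f"]) (auto simp: supp_def)
lemma finf_const [simp]: "finf (fls_const c)"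
  by (rule finf_subset[of "{0}"]) (auto simp: supp_def)
lemma finf_zero [simp]: "finf 0" by (rule finf_subset[of "{}"]) (auto simp: supp_def)
lemma finf_one [simp]: "finf 1" by (rule finf_subset[of "{0}"]) (auto simp: supp_def)
lemma finf_X [simp]: "finf fls_X" by (rule finf_subset[of "{1}"]) (auto simp: supp_def)
lemma finf_X_inv [simp]: "finf fls_X_inv" by (rule finf_subset[of "{-1}"]) (auto simp: supp_def)

lemma Ez_add [simp]: "finf f \<Longrightarrow> finf g \<Longrightarrow> Ez (f + g) = Ez f + Ez g"
proof -
  assume a: "finf f" "finf g"
  define S where "S = supp f \<union> supp g"
  have S: "finite S" using a by (simp add: S_def finf_def)
  have "Ez (f+g) = (\<Sum>m\<in>S. (f+g) $$ m)" by (rule Ez_eq[OF S]) (auto simp: S_def supp_def)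
  also have "\<dots> = (\<Sum>m\<in>S. f $$ m) + (\<Sum>m\<in>S. g $$ m)" by (simp add: sum.distrib)
  also have "\<dots> = Ez f + Ez g"
    using Ez_eq[OF S, of f] Ez_eq[OF S, of g] by (simp add: S_def)
  finally show ?thesis .
qed
lemma Ez_uminus [simp]: "Ez (- f) = - Ez f"
  by (simp add: Ez_def supp_def sum_negf)
lemma Ez_diff [simp]: "finf f \<Longrightarrow> finf g \<Longrightarrow> Ez (f - g) = Ez f - Ez g"
  using Ez_add[of f "-g"] by simp
lemma Ez_zero [simp]: "Ez 0 = 0" by (simp add: Ez_def supp_def)
lemma Ez_const [simp]: "Ez (fls_const c) = c"
  by (subst Ez_eq[of "{0}"]) (auto simp: supp_def)
lemma Ez_one [simp]: "Ez 1 = 1"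
  by (subst Ez_eq[of "{0}"]) (auto simp: supp_def)
lemma Ez_X [simp]: "Ez fls_X = 1"
  by (subst Ez_eq[of "{1}"]) (auto simp: supp_def)
lemma Ez_X_inv [simp]: "Ez fls_X_inv = 1"
  by (subst Ez_eq[of "{-1}"]) (auto simp: supp_def)

lemma finf_sum [simp]: "(\<And>i. i \<in> A \<Longrightarrow> finf (f i)) \<Longrightarrow> finf (\<Sum>i\<in>A. f i)"
  by (induction A rule: infinite_finite_induct) auto
lemma Ez_sum: "(\<And>i. i \<in> A \<Longrightarrow> finf (f i)) \<Longrightarrow> Ez (\<Sum>i\<in>A. f i) = (\<Sum>i\<in>A. Ez (f i))"
  by (induction A rule: infinite_finite_induct) auto

lemma fls_times_nth_supp:
  assumes "finite S" "supp f \<subseteq> S"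
  shows "(f * g) $$ n = (\<Sum>a\<in>S. f $$ a * g $$ (n - a))"
proof -
  define df dg where "df = fls_subdegree f" and "dg = fls_subdegree g"
  have "(f * g) $$ n = (\<Sum>i=df..n - dg. f $$ i * g $$ (n - i))"
    unfolding df_def dg_def by (rule fls_times_nth(2))
  also have "\<dots> = (\<Sum>i\<in>{df..n-dg} \<union> S. f $$ i * g $$ (n - i))"
  proof (rule sum.mono_neutral_left)
    show "\<forall>i\<in>{df..n - dg} \<union> S - {df..n - dg}. f $$ i * g $$ (n - i) = 0"
    proof
      fix i assume "i \<in> {df..n - dg} \<union> S - {df..n - dg}"
      then have "i < df \<or> n - i < dg" by auto
      then show "f $$ i * g $$ (n - i) = 0" unfolding df_def dg_def by auto
    qed
  qed (use assms in auto)
  also have "\<dots> = (\<Sum>a\<in>S. f $$ a * g $$ (n - a))"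
    by (rule sum.mono_neutral_right) (use assms in \<open>auto simp: supp_def\<close>)
  finally show ?thesis .
qed

lemma Ez_mult:
  assumes "finf f" "finf g"
  shows "finf (f * g) \<and> Ez (f * g) = Ez f * Ez g"
proof -
  define S where "S = supp f"
  define S' where "S' = supp g"
  have S: "finite S" "finite S'" using assms by (auto simp: S_def S'_def finf_def)
  define SS where "SS = (\<lambda>(a,b). a + b) ` (S \<times> S')"
  have SS: "finite SS" using S by (simp add: SS_def)
  have sub: "supp (f*g) \<subseteq> SS"
  proof
    fix n assume "n \<in> supp (f*g)"
    then have "(\<Sum>a\<in>S. f $$ a * g $$ (n - a)) \<noteq> 0"
      using fls_times_nth_supp[OF S(1), of f g n] by (simp add: S_def supp_def)
    then obtain a where "a \<in> S" "f $$ a * g $$ (n - a) \<noteq> 0" by (meson sum.neutral)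
    then have "a \<in> S" "n - a \<in> S'" by (auto simp: S'_def supp_def)
    then show "n \<in> SS" unfolding SS_def by (auto intro!: image_eqI[of _ _ "(a, n - a)"])
  qed
  have "Ez (f * g) = (\<Sum>n\<in>SS. (f*g) $$ n)" by (rule Ez_eq[OF SS sub])
  also have "\<dots> = (\<Sum>n\<in>SS. \<Sum>a\<in>S. f $$ a * g $$ (n - a))"
    using fls_times_nth_supp[OF S(1), of f g] by (simp add: S_def)
  also have "\<dots> = (\<Sum>a\<in>S. f $$ a * (\<Sum>n\<in>SS. g $$ (n - a)))"
    by (subst sum.swap) (simp add: sum_distrib_left)
  also have "\<dots> = (\<Sum>a\<in>S. f $$ a * Ez g)"
  proof (rule sum.cong[OF refl])
    fix a assume a: "a \<in> S"
    have "(\<Sum>n\<in>SS. g $$ (n - a)) = (\<Sum>b\<in>(\<lambda>n. n - a) ` SS. g $$ b)"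
      by (subst sum.reindex) (auto simp: inj_on_def)
    also have "\<dots> = Ez g"
    proof (rule Ez_eq[symmetric])
      show "finite ((\<lambda>n. n - a) ` SS)" using SS by simp
      show "supp g \<subseteq> (\<lambda>n. n - a) ` SS"
      proof
        fix b assume "b \<in> supp g"
        then have "a + b \<in> SS" using a by (auto simp: SS_def S'_def)
        then show "b \<in> (\<lambda>n. n - a) ` SS" by (auto intro!: image_eqI[of _ _ "a + b"])
      qed
    qed
    finally show "f $$ a * (\<Sum>n\<in>SS. g $$ (n - a)) = f $$ a * Ez g" by simp
  qed
  also have "\<dots> = Ez f * Ez g" by (simp add: Ez_def S_def sum_distrib_right)
  finally show ?thesis using finf_subset[OF SS sub] by simp
qed

lemma finf_mult [simp]: "finf f \<Longrightarrow> finf g \<Longrightarrow> finf (f * g)"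
  using Ez_mult by blast
lemma Ez_mult' [simp]: "finf f \<Longrightarrow> finf g \<Longrightarrow> Ez (f * g) = Ez f * Ez g"
  using Ez_mult by blast

lemma Ez_TzTz: "finf f \<Longrightarrow> Ez (Tz (Tz f)) = (\<Sum>m | f $$ m \<noteq> 0. of_int m ^ 2 * f $$ m)"
  unfolding finf_def
  by (subst Ez_eq[of "supp f"]) (auto simp: supp_def power2_eq_square mult.assoc)


definition Th :: "gf \<Rightarrow> gf" where "Th F = Abs_fps (\<lambda>k. Tz (F $ k))"
definition Eh :: "gf \<Rightarrow> rat fps" where "Eh F = Abs_fps (\<lambda>k. Ez (F $ k))"
definition Fin :: "gf \<Rightarrow> bool" where "Fin F \<longleftrightarrow> (\<forall>k. finf (F $ k))"

lemma Th_nth [simp]: "Th F $ k = Tz (F $ k)" by (simp add: Th_def)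
lemma Eh_nth [simp]: "Eh F $ k = Ez (F $ k)" by (simp add: Eh_def)

lemma Th_add [simp]: "Th (F + G) = Th F + Th G" by (rule fps_ext) simp
lemma Th_diff [simp]: "Th (F - G) = Th F - Th G" by (rule fps_ext) simp
lemma Th_uminus [simp]: "Th (- F) = - Th F" by (rule fps_ext) simp
lemma Th_zero [simp]: "Th 0 = 0" by (rule fps_ext) simp
lemma Th_one [simp]: "Th 1 = 0" by (rule fps_ext) simp
lemma Th_X [simp]: "Th fps_X = 0" by (rule fps_ext) simp
lemma Th_const [simp]: "Th (fps_const c) = fps_const (Tz c)" by (rule fps_ext) simp

lemma Th_mult: "Th (F * G) = Th F * G + F * Th G"
  by (rule fps_ext) (simp add: fps_mult_nth Tz_sum Tz_mult sum.distrib)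

lemma Th_power_zero: "Th F = 0 \<Longrightarrow> Th (F ^ k) = 0"
  by (induction k) (simp_all add: Th_mult)

lemma Th_prod_zero: "(\<And>j. j \<in> A \<Longrightarrow> Th (f j) = 0) \<Longrightarrow> Th (\<Prod>j\<in>A. f j) = 0"
  by (induction A rule: infinite_finite_induct) (simp_all add: Th_mult)

lemma zvar_inv: "inverse zvar = fps_const fls_X_inv"
  by (simp add: zvar_def fps_const_inverse fls_inverse_X)

lemma Th_zvar [simp]: "Th zvar = zvar" by (simp add: zvar_def)
lemma Th_zvar_inv [simp]: "Th (inverse zvar) = - inverse zvar"
  by (simp add: zvar_inv fps_const_neg)

lemma Fin_add [simp]: "Fin F \<Longrightarrow> Fin G \<Longrightarrow> Fin (F + G)" by (simp add: Fin_def)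
lemma Fin_diff [simp]: "Fin F \<Longrightarrow> Fin G \<Longrightarrow> Fin (F - G)" by (simp add: Fin_def)
lemma Fin_uminus [simp]: "Fin F \<Longrightarrow> Fin (- F)" by (simp add: Fin_def)
lemma Fin_zero [simp]: "Fin 0" by (simp add: Fin_def)
lemma Fin_one [simp]: "Fin 1" by (simp add: Fin_def fps_one_nth)
lemma Fin_X [simp]: "Fin fps_X" by (simp add: Fin_def fps_X_def)
lemma Fin_const [simp]: "finf c \<Longrightarrow> Fin (fps_const c)" by (simp add: Fin_def)
lemma Fin_zvar [simp]: "Fin zvar" by (simp add: zvar_def)
lemma Fin_zvar_inv [simp]: "Fin (inverse zvar)" by (simp add: zvar_inv)
lemma Fin_Th [simp]: "Fin F \<Longrightarrow> Fin (Th F)" by (simp add: Fin_def)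
lemma Fin_mult [simp]: "Fin F \<Longrightarrow> Fin G \<Longrightarrow> Fin (F * G)"
  by (simp add: Fin_def fps_mult_nth)

lemma Eh_add [simp]: "Fin F \<Longrightarrow> Fin G \<Longrightarrow> Eh (F + G) = Eh F + Eh G"
  by (rule fps_ext) (simp add: Fin_def)
lemma Eh_diff [simp]: "Fin F \<Longrightarrow> Fin G \<Longrightarrow> Eh (F - G) = Eh F - Eh G"
  by (rule fps_ext) (simp add: Fin_def)
lemma Eh_uminus [simp]: "Eh (- F) = - Eh F"
  by (rule fps_ext) simp
lemma Eh_zero [simp]: "Eh 0 = 0" by (rule fps_ext) simp
lemma Eh_one [simp]: "Eh 1 = 1" by (rule fps_ext) (simp add: fps_one_nth)
lemma Eh_X [simp]: "Eh fps_X = fps_X" by (rule fps_ext) (simp add: fps_X_def)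
lemma Eh_const [simp]: "Eh (fps_const c) = fps_const (Ez c)" by (rule fps_ext) simp
lemma Eh_zvar [simp]: "Eh zvar = 1" by (simp add: zvar_def)
lemma Eh_zvar_inv [simp]: "Eh (inverse zvar) = 1" by (simp add: zvar_inv)
lemma Eh_mult [simp]: "Fin F \<Longrightarrow> Fin G \<Longrightarrow> Eh (F * G) = Eh F * Eh G"
  by (rule fps_ext) (simp add: Fin_def fps_mult_nth Ez_sum)

lemma Fin_two [simp]: assumes "Fin F" shows "Fin (2 * F)"
proof -
  have "Fin (F + F)" by (rule Fin_add[OF assms assms])
  then show ?thesis by (simp only: mult_2)
qed
lemma Eh_two [simp]: assumes "Fin F" shows "Eh (2 * F) = 2 * Eh F"
proof -
  have "Eh (2 * F) = Eh (F + F)" by (simp only: mult_2)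
  also have "\<dots> = Eh F + Eh F" by (rule Eh_add[OF assms assms])
  finally show ?thesis by simp
qed

lemma Fin_power [simp]: "Fin F \<Longrightarrow> Fin (F ^ k)"
  by (induction k) simp_all
lemma Eh_power [simp]: "Fin F \<Longrightarrow> Eh (F ^ k) = Eh F ^ k"
  by (induction k) simp_all
lemma Fin_prod [simp]: "(\<And>j. j \<in> A \<Longrightarrow> Fin (f j)) \<Longrightarrow> Fin (\<Prod>j\<in>A. f j)"
  by (induction A rule: infinite_finite_induct) simp_all
lemma Eh_prod: "(\<And>j. j \<in> A \<Longrightarrow> Fin (f j)) \<Longrightarrow> Eh (\<Prod>j\<in>A. f j) = (\<Prod>j\<in>A. Eh (f j))"
  by (induction A rule: infinite_finite_induct) simp_all

lemma Fin_inverse: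
  assumes "Fin G" "G $ 0 = 1"
  shows "Fin (inverse G)"
proof -
  define H where "H = inverse G"
  have HG: "H * G = 1" unfolding H_def by (rule inverse_mult_eq_1) (use assms in simp)
  have "finf (H $ k)" for k
  proof (induction k rule: less_induct)
    case (less k)
    show ?case
    proof (cases k)
      case 0 then show ?thesis using assms by (simp add: H_def)
    next
      case (Suc k')
      have "0 = (H * G) $ k" using HG Suc by simp
      also have "\<dots> = (\<Sum>i=0..k. H$i * G$(k - i))" by (rule fps_mult_nth)
      also have "\<dots> = (\<Sum>i\<in>insert k {0..<k}. H$i * G$(k - i))"
        by (rule sum.cong) auto
      also have "\<dots> = H$k + (\<Sum>i\<in>{0..<k}. H$i * G$(k - i))" using assms by simp
      finally have "H $ k = - (\<Sum>i\<in>{0..<k}. H$i * G$(k - i))" by (simp add: eq_neg_iff_add_eq_0)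
      moreover have "finf (\<Sum>i\<in>{0..<k}. H$i * G$(k - i))"
        using less assms(1) by (intro finf_sum finf_mult) (auto simp: Fin_def)
      ultimately show ?thesis by simp
    qed
  qed
  then show ?thesis by (simp add: Fin_def H_def)
qed


lemma core:
  assumes "Fin F" "Fin A" "Fin B" "F * B = A" "Th A = 0" "Eh (Th B) = 0"
    "Eh (Th (Th B)) = - 2 * Eh B * S" "Eh B \<noteq> 0"
  shows "Eh (Th (Th F)) = 2 * Eh F * S"
proof -
  have 1: "Th F * B + F * Th B = 0" using assms(4,5) Th_mult[of F B] by simp
  have "Th (Th F * B + F * Th B) = 0" using 1 by simp
  then have 2: "Th (Th F) * B + Th F * Th B + Th F * Th B + F * Th (Th B) = 0"
    by (simp add: Th_mult algebra_simps)
  have "Eh (Th (Th F) * B + Th F * Th B + Th F * Th B + F * Th (Th B)) = 0"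
    using 2 by simp
  then have "Eh (Th (Th F)) * Eh B + Eh F * (- 2 * Eh B * S) = 0"
    using assms by simp
  then have "Eh B * (Eh (Th (Th F)) - 2 * Eh F * S) = 0" by (simp add: algebra_simps)
  then show ?thesis using assms(8) by simp
qed

lemma Bprod:
  fixes w :: "nat \<Rightarrow> gf" and H :: "nat \<Rightarrow> rat fps"
  assumes w: "\<And>j. Th (w j) = 0" "\<And>j. Fin (w j)"
    and H: "\<And>j. H j * (1 - Eh (w j))^2 = Eh (w j)"
  defines "b \<equiv> \<lambda>j. (1 - zvar * w j) * (1 - inverse zvar * w j)"
  shows "Fin (\<Prod>j<N. b j) \<and> Eh (Th (\<Prod>j<N. b j)) = 0 \<and>
     Eh (Th (Th (\<Prod>j<N. b j))) = - 2 * Eh (\<Prod>j<N. b j) * (\<Sum>j<N. H j)"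
proof (induction N)
  case 0 then show ?case by simp
next
  case (Suc N)
  define P where "P = (\<Prod>j<N. b j)"
  have Fb: "Fin (b N)" by (simp add: b_def w)
  have Tb: "Th (b N) = inverse zvar * w N - zvar * w N"
    by (simp add: b_def Th_mult w algebra_simps)
  have TTb: "Th (Th (b N)) = - (inverse zvar * w N) - zvar * w N"
    by (simp add: Tb Th_mult w)
  have Eb: "Eh (b N) = (1 - Eh (w N))^2" by (simp add: b_def w power2_eq_square)
  have ETb: "Eh (Th (b N)) = 0" by (simp add: Tb w)
  have ETTb: "Eh (Th (Th (b N))) = - 2 * Eh (w N)" by (simp add: TTb w)
  have IH: "Fin P" "Eh (Th P) = 0" "Eh (Th (Th P)) = - 2 * Eh P * (\<Sum>j<N. H j)"
    using Suc unfolding P_def by auto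
  have prodS: "(\<Prod>j<Suc N. b j) = P * b N" by (simp add: P_def)
  have TT: "Th (Th (P * b N)) = Th (Th P) * b N + Th P * Th (b N) + Th P * Th (b N) + P * Th (Th (b N))"
    by (simp add: Th_mult algebra_simps)
  have "Eh (Th (Th (P * b N))) = Eh (Th (Th P)) * Eh (b N) + Eh (Th P) * Eh (Th (b N)) + Eh (Th P) * Eh (Th (b N)) + Eh P * Eh (Th (Th (b N)))"
    by (subst TT) (simp only: Eh_add Eh_mult Fin_add Fin_mult Fin_Th IH(1) Fb)
  also have "\<dots> = - 2 * Eh P * (\<Sum>j<N. H j) * (1 - Eh (w N))^2 + Eh P * (- 2 * Eh (w N))"
    using IH Eb ETTb ETb by simp
  also have "\<dots> = - 2 * (Eh P * (1 - Eh (w N))^2) * (\<Sum>j<N. H j) - 2 * Eh P * (H N * (1 - Eh (w N))^2)"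
    using H[of N] by (simp add: algebra_simps)
  also have "\<dots> = - 2 * Eh (P * b N) * (\<Sum>j<Suc N. H j)"
    using IH Fb Eb by (simp add: algebra_simps)
  finally have F3: "Eh (Th (Th (P * b N))) = - 2 * Eh (P * b N) * (\<Sum>j<Suc N. H j)" .
  have F1: "Fin (P * b N)" using IH Fb by simp
  have F2: "Eh (Th (P * b N)) = 0" using IH Fb ETb by (simp add: Th_mult)
  show ?case unfolding prodS using F1 F2 F3 by blast
qed


definition Hs :: "nat \<Rightarrow> rat fps" where
  "Hs a = Abs_fps (\<lambda>t. if a dvd t then of_nat t / of_nat a else 0)"
definition Kf :: "nat \<Rightarrow> rat fps" where
  "Kf a = Abs_fps (\<lambda>t. if a dvd t \<and> 0 < t then 1 else 0)"

lemma Kf_nth: "Kf a $ t = (if a dvd t \<and> 0 < t then 1 else 0)" unfolding Kf_def by (rule fps_nth_Abs_fps)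
lemma Hs_nth: "Hs a $ t = (if a dvd t then of_nat t / of_nat a else 0)" unfolding Hs_def by (rule fps_nth_Abs_fps)

lemma dvd_diff_iff_nat: "a \<le> t \<Longrightarrow> (a::nat) dvd (t - a) \<longleftrightarrow> a dvd t"
proof -
  assume "a \<le> t"
  then have "t = a + (t - a)" by simp
  then have "a dvd t \<longleftrightarrow> a dvd a + (t - a)" by simp
  also have "\<dots> \<longleftrightarrow> a dvd (t - a)" by (rule dvd_add_right_iff) simp
  finally show ?thesis by blast
qed

lemma Kf_eq: assumes "0 < a" shows "Kf a * (1 - fps_X ^ a) = fps_X ^ a"
proof (rule fps_ext)
  fix t
  have e: "Kf a * (1 - fps_X ^ a) = Kf a - fps_X ^ a * Kf a"
    by (simp add: algebra_simps)
  have "(Kf a * (1 - fps_X ^ a)) $ t = Kf a $ t - (fps_X ^ a * Kf a) $ t"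
    unfolding e by (simp only: fps_sub_nth)
  also have "\<dots> = (fps_X ^ a :: rat fps) $ t"
  proof (cases "t < a")
    case True
    then have "\<not> (a dvd t \<and> 0 < t)" by (auto dest: dvd_imp_le)
    then show ?thesis using True by (simp add: Kf_nth fps_X_power_mult_nth)
  next
    case False
    then have d: "a dvd (t - a) \<longleftrightarrow> a dvd t" by (simp add: dvd_diff_iff_nat)
    show ?thesis
    proof (cases "t = a")
      case True then show ?thesis using assms by (simp add: Kf_nth fps_X_power_mult_nth)
    next
      case False2: False
      then have "0 < t - a" using False by simp
      then show ?thesis using False False2 d assms by (simp add: Kf_nth fps_X_power_mult_nth)
    qed
  qed
  finally show "(Kf a * (1 - fps_X ^ a)) $ t = (fps_X ^ a :: rat fps) $ t" .
qed

lemma Hs_eq: assumes "0 < a" shows "Hs a * (1 - fps_X ^ a)^2 = fps_X ^ a"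
proof (rule fps_ext)
  fix t
  have e: "Hs a * (1 - fps_X ^ a)^2 = Hs a - fps_X ^ a * Hs a - fps_X ^ a * Hs a + fps_X ^ (a + a) * Hs a"
    by (simp add: power2_eq_square algebra_simps power_add)
  have "(Hs a * (1 - fps_X ^ a)^2) $ t = Hs a $ t - (fps_X ^ a * Hs a) $ t - (fps_X ^ a * Hs a) $ t + (fps_X ^ (a + a) * Hs a) $ t"
    unfolding e by (simp only: fps_add_nth fps_sub_nth)
  also have "\<dots> = (fps_X ^ a :: rat fps) $ t"
  proof (cases "t < a")
    case True
    then have "\<not> (a dvd t) \<or> t = 0" by (auto dest: dvd_imp_le)
    then show ?thesis using True by (auto simp: Hs_nth fps_X_power_mult_nth)
  next
    case False
    show ?thesis
    proof (cases "t < a + a")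
      case True
      have "a dvd t \<longleftrightarrow> t = a"
      proof
        assume "a dvd t" then obtain q where q: "t = a * q" by blast
        have "q \<noteq> 0" using False q assms by auto
        moreover have "q < 2"
        proof (rule ccontr)
          assume "\<not> q < 2"
          then have "a * 2 \<le> a * q" by simp
          then show False using True q by (simp add: mult_2_right)
        qed
        ultimately have "q = 1" by simp
        then show "t = a" using q by simp
      qed simp
      moreover have "a dvd (t - a) \<longleftrightarrow> a dvd t" using False by (simp add: dvd_diff_iff_nat)
      ultimately show ?thesis using False True assms
        by (auto simp: Hs_nth fps_X_power_mult_nth)
    next
      case False2: False
      have d: "a dvd (t - (a + a)) \<longleftrightarrow> a dvd t" "a dvd (t - a) \<longleftrightarrow> a dvd t"
        using False False2 dvd_diff_iff_nat[of a "t - a"] dvd_diff_iff_nat[of a t] by (simp_all add: diff_diff_add)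
      have "of_nat t / of_nat a - of_nat (t - a) / of_nat a - of_nat (t - a) / of_nat a + of_nat (t - (a + a)) / (of_nat a :: rat) = 0"
        using False False2 assms by (simp add: of_nat_diff field_simps)
      note eq = this
      have h1: "(fps_X ^ a * Hs a) $ t = Hs a $ (t - a)" "(fps_X ^ (a + a) * Hs a) $ t = Hs a $ (t - (a + a))"
        using False False2 by (simp_all add: fps_X_power_mult_nth)
      have h3: "(fps_X ^ a :: rat fps) $ t = 0" using False2 assms by simp
      show ?thesis unfolding h1 h3
      proof (cases "a dvd t")
        case True
        then show "Hs a $ t - Hs a $ (t - a) - Hs a $ (t - a) + Hs a $ (t - (a + a)) = 0"
          using d eq by (simp add: Hs_nth)
      qed (use d in \<open>simp add: Hs_nth\<close>)
    qed
  qed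
  finally show "(Hs a * (1 - fps_X ^ a)^2) $ t = (fps_X ^ a :: rat fps) $ t" .
qed


lemma Th_X_power [simp]: "Th (fps_X ^ k) = 0" by (rule Th_power_zero) simp

lemma crank_general:
  assumes "Fin A" "Th A = 0" "Fin B" "B $ 0 = 1" "Eh (Th B) = 0" "Eh (Th (Th B)) = - 2 * Eh B * S"
  shows "Fin (A / B) \<and> Eh (Th (Th (A / B))) = 2 * Eh (A / B) * S \<and> Eh (A / B) * Eh B = Eh A"
proof -
  have d: "A / B = A * inverse B" using assms(4) by (simp add: fps_divide_unit)
  have FiB: "Fin (inverse B)" by (rule Fin_inverse) (use assms in auto)
  have F: "Fin (A / B)" using d FiB assms(1) by simp
  have FB: "A / B * B = A" using d assms(4) by (simp add: mult.assoc inverse_mult_eq_1)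
  have e1: "Eh B $ 0 = 1" using assms(4) by simp
  have EB: "Eh B \<noteq> 0"
  proof
    assume "Eh B = 0"
    then have "Eh B $ 0 = 0" by (simp only: fps_zero_nth)
    with e1 show False by simp
  qed
  have "Eh (Th (Th (A / B))) = 2 * Eh (A / B) * S"
    by (rule core[OF F assms(1) assms(3) FB assms(2) assms(5) assms(6) EB])
  moreover have "Eh (A / B) * Eh B = Eh A"
    using FB F assms(3) Eh_mult[of "A / B" B] by simp
  ultimately show ?thesis using F by simp
qed

lemma second_moment:
  "Fin F \<Longrightarrow> (\<Sum>m | F $ n $$ m \<noteq> 0. of_int m ^ 2 * F $ n $$ m) = Eh (Th (Th F)) $ n"
  by (simp add: Ez_TzTz Fin_def)

definition PA :: "nat \<Rightarrow> gf" where "PA n = (\<Prod>j<Suc n. 1 - fps_X\<^sup>2 * fps_X ^ (2 * j))"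
definition PB :: "nat \<Rightarrow> gf" where
  "PB n = (\<Prod>j<2 * Suc n. 1 - zvar * fps_X * fps_X ^ (1 * j)) *
          (\<Prod>j<2 * Suc n. 1 - inverse zvar * fps_X * fps_X ^ (1 * j))"

lemma GF_M_eqn: "eqn n GF_M (PA n / PB n)"
proof -
  have 1: "eqn n (qpoch_inf (fps_X\<^sup>2) 2) (PA n)"
    unfolding PA_def by (rule qpoch_eqn) simp_all
  have 2: "eqn n (qpoch_inf (zvar * fps_X) 1 * qpoch_inf (inverse zvar * fps_X) 1) (PB n)"
    unfolding PB_def by (intro eqn_mult qpoch_eqn) simp_all
  have "PB n $ 0 = 1" by (simp add: PB_def prod_nth_0)
  then show ?thesis unfolding GF_M_def by (intro eqn_div 1 2) simp
qed

lemma crank_M: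
  "Fin (PA n / PB n) \<and> Eh (Th (Th (PA n / PB n))) = 2 * Eh (PA n / PB n) * (\<Sum>j<2 * Suc n. Hs (Suc j))
   \<and> Eh (PA n / PB n) * Eh (PB n) = Eh (PA n)"
proof (rule crank_general)
  define w :: "nat \<Rightarrow> gf" where "w = (\<lambda>j. fps_X * fps_X ^ (1 * j))"
  define b where "b = (\<lambda>j. (1 - zvar * w j) * (1 - inverse zvar * w j))"
  have Ew: "Eh (w j) = fps_X ^ Suc j" for j by (simp add: w_def)
  have PBb: "PB n = (\<Prod>j<2 * Suc n. b j)"
    unfolding PB_def b_def w_def by (simp add: prod.distrib mult.assoc)
  have "Fin (\<Prod>j<2 * Suc n. b j) \<and> Eh (Th (\<Prod>j<2 * Suc n. b j)) = 0 \<and>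
     Eh (Th (Th (\<Prod>j<2 * Suc n. b j))) = - 2 * Eh (\<Prod>j<2 * Suc n. b j) * (\<Sum>j<2 * Suc n. Hs (Suc j))"
    unfolding b_def
    by (rule Bprod) (auto simp: w_def Th_mult Hs_eq[of "Suc _", simplified] Ew[unfolded w_def])
  then show "Fin (PB n)" "Eh (Th (PB n)) = 0"
    "Eh (Th (Th (PB n))) = - 2 * Eh (PB n) * (\<Sum>j<2 * Suc n. Hs (Suc j))"
    unfolding PBb by auto
  show "Fin (PA n)" by (simp add: PA_def)
  show "Th (PA n) = 0" by (simp add: PA_def Th_prod_zero Th_mult)
  show "PB n $ 0 = 1" by (simp add: PB_def prod_nth_0)
qed

definition PA2 :: "nat \<Rightarrow> gf" where
  "PA2 n = (\<Prod>j<Suc n. 1 - (- fps_X) * fps_X ^ (1 * j)) * (\<Prod>j<Suc n. 1 - fps_X\<^sup>2 * fps_X ^ (2 * j))"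
definition PC2 :: "nat \<Rightarrow> gf" where
  "PC2 n = (\<Prod>j<Suc n. 1 - fps_X * fps_X ^ (2 * j))"
definition PB2 :: "nat \<Rightarrow> gf" where
  "PB2 n = PC2 n * (\<Prod>j<Suc n. 1 - zvar * fps_X\<^sup>2 * fps_X ^ (2 * j)) *
          (\<Prod>j<Suc n. 1 - inverse zvar * fps_X\<^sup>2 * fps_X ^ (2 * j))"

lemma GF_M2_eqn: "eqn n GF_M2 (PA2 n / PB2 n)"
proof -
  have 1: "eqn n (qpoch_inf (- fps_X) 1 * qpoch_inf (fps_X\<^sup>2) 2) (PA2 n)"
    unfolding PA2_def by (intro eqn_mult qpoch_eqn) simp_all
  have 2: "eqn n (qpoch_inf fps_X 2 * qpoch_inf (zvar * fps_X\<^sup>2) 2 * qpoch_inf (inverse zvar * fps_X\<^sup>2) 2) (PB2 n)"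
    unfolding PB2_def PC2_def by (intro eqn_mult qpoch_eqn) simp_all
  have "PB2 n $ 0 = 1" by (simp add: PB2_def PC2_def prod_nth_0)
  then show ?thesis unfolding GF_M2_def by (intro eqn_div 1 2) simp
qed

lemma crank_M2:
  "Fin (PA2 n / PB2 n) \<and> Eh (Th (Th (PA2 n / PB2 n))) = 2 * Eh (PA2 n / PB2 n) * (\<Sum>j<Suc n. Hs (2 * j + 2))
   \<and> Eh (PA2 n / PB2 n) * Eh (PB2 n) = Eh (PA2 n)"
proof (rule crank_general)
  define w :: "nat \<Rightarrow> gf" where "w = (\<lambda>j. fps_X\<^sup>2 * fps_X ^ (2 * j))"
  define b where "b = (\<lambda>j. (1 - zvar * w j) * (1 - inverse zvar * w j))"
  define Bp where "Bp = (\<Prod>j<Suc n. b j)"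
  define S where "S = (\<Sum>j<Suc n. Hs (2 * j + 2))"
  have Ew: "Eh (w j) = fps_X ^ (2 * j + 2)" for j by (simp add: w_def power_add[symmetric] add.commute)
  have PBb: "PB2 n = PC2 n * Bp"
    unfolding PB2_def Bp_def b_def w_def by (simp add: prod.distrib mult.assoc)
  have wT: "Th (w j) = 0" for j by (simp add: w_def Th_mult)
  have wF: "Fin (w j)" for j by (simp add: w_def)
  have wH: "Hs (2 * j + 2) * (1 - Eh (w j))^2 = Eh (w j)" for j
    unfolding Ew by (rule Hs_eq) simp
  have B: "Fin Bp \<and> Eh (Th Bp) = 0 \<and> Eh (Th (Th Bp)) = - 2 * Eh Bp * S"
    unfolding Bp_def b_def S_def by (rule Bprod[of w, OF wT wF wH])
  have C: "Fin (PC2 n)" "Th (PC2 n) = 0" by (simp_all add: PC2_def Th_prod_zero Th_mult)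
  show "Fin (PB2 n)" using B C by (simp add: PBb)
  show "Eh (Th (PB2 n)) = 0" using B C by (simp add: PBb Th_mult)
  show "Eh (Th (Th (PB2 n))) = - 2 * Eh (PB2 n) * (\<Sum>j<Suc n. Hs (2 * j + 2))"
  proof -
    have "Eh (Th (Th (PB2 n))) = Eh (PC2 n) * Eh (Th (Th Bp))" using B C by (simp add: PBb Th_mult)
    also have "\<dots> = - 2 * Eh (PB2 n) * S" using B C by (simp add: PBb)
    finally show ?thesis by (simp add: S_def)
  qed
  show "Fin (PA2 n)" by (simp add: PA2_def)
  show "Th (PA2 n) = 0" by (simp add: PA2_def Th_prod_zero Th_mult)
  show "PB2 n $ 0 = 1" by (simp add: PB2_def PC2_def prod_nth_0)
qed


type_synonym qs = "rat fps"

definition Dq :: "qs \<Rightarrow> qs" where "Dq f = fps_X * fps_deriv f"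

lemma Dq_nth [simp]: "Dq f $ n = of_nat n * f $ n"
  by (simp add: Dq_def fps_mult_fps_X_deriv_shift)

lemma Dq_mult: "Dq (f * g) = Dq f * g + f * Dq g"
  by (simp add: Dq_def algebra_simps)

lemma Dq_one_minus_X: "Dq (1 - fps_X ^ a) = - (of_nat a * fps_X ^ a)"
  by (rule fps_ext) auto

lemma logD:
  fixes a :: "nat \<Rightarrow> nat" and K :: nat
  assumes "\<And>j. 0 < a j"
  shows "Dq (\<Prod>j<K. 1 - fps_X ^ a j) = - (\<Prod>j<K. 1 - fps_X ^ a j) * (\<Sum>j<K. of_nat (a j) * Kf (a j))"
proof (induction K)
  case 0 show ?case by (rule fps_ext) simp
next
  case (Suc K)
  define P where "P = (\<Prod>j<K. 1 - fps_X ^ a j :: qs)"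
  define L where "L = (\<Sum>j<K. of_nat (a j) * Kf (a j) :: qs)"
  have k: "Kf (a K) * (1 - fps_X ^ a K) = fps_X ^ a K" by (rule Kf_eq[OF assms])
  have "Dq (P * (1 - fps_X ^ a K)) = Dq P * (1 - fps_X ^ a K) - P * (of_nat (a K) * fps_X ^ a K)"
    by (simp add: Dq_mult Dq_one_minus_X)
  also have "\<dots> = - P * L * (1 - fps_X ^ a K) - P * (of_nat (a K) * (Kf (a K) * (1 - fps_X ^ a K)))"
    using Suc by (simp add: P_def L_def k)
  also have "\<dots> = - (P * (1 - fps_X ^ a K)) * (L + of_nat (a K) * Kf (a K))"
    by (simp add: algebra_simps)
  finally show ?case by (simp add: P_def L_def)
qed

lemma Dq_square: "Dq (f * f) = 2 * f * Dq f"
  by (simp add: Dq_mult)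

lemma unique_rec:
  fixes X Y C C' :: qs
  assumes "eqn n (Dq X) (X * C)" "eqn n (Dq Y) (Y * C')" "eqn n C C'" "C $ 0 = 0" "X $ 0 = Y $ 0"
  shows "eqn n X Y"
proof -
  have C0: "C' $ 0 = 0" using assms(3,4) by (auto simp: eqn_def)
  have "k \<le> n \<longrightarrow> X $ k = Y $ k" for k
  proof (induction k rule: less_induct)
    case (less k)
    show ?case
    proof (cases k)
      case 0 then show ?thesis using assms(5) by simp
    next
      case (Suc k')
      show ?thesis
      proof
        assume kn: "k \<le> n"
        have sX: "(X * C) $ k = (\<Sum>i\<in>{0..<k}. X $ i * C $ (k - i))"
        proof -
          have "(X * C) $ k = (\<Sum>i=0..k. X $ i * C $ (k - i))" by (rule fps_mult_nth)
          also have "\<dots> = (\<Sum>i\<in>insert k {0..<k}. X $ i * C $ (k - i))" by (rule sum.cong) auto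
          finally show ?thesis using assms(4) by simp
        qed
        have sY: "(Y * C') $ k = (\<Sum>i\<in>{0..<k}. Y $ i * C' $ (k - i))"
        proof -
          have "(Y * C') $ k = (\<Sum>i=0..k. Y $ i * C' $ (k - i))" by (rule fps_mult_nth)
          also have "\<dots> = (\<Sum>i\<in>insert k {0..<k}. Y $ i * C' $ (k - i))" by (rule sum.cong) auto
          finally show ?thesis using C0 by simp
        qed
        have "(\<Sum>i\<in>{0..<k}. X $ i * C $ (k - i)) = (\<Sum>i\<in>{0..<k}. Y $ i * C' $ (k - i))"
          using less kn assms(3) by (intro sum.cong) (auto simp: eqn_def)
        then have "of_nat k * X $ k = of_nat k * Y $ k"
          using assms(1,2) kn sX sY by (auto simp: eqn_def)
        then show "X $ k = Y $ k" using Suc by simp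
      qed
    qed
  qed
  then show ?thesis by (simp add: eqn_def)
qed

definition P1 :: "nat \<Rightarrow> qs" where "P1 K = (\<Prod>j<K. 1 - fps_X ^ Suc j)"
definition P2 :: "nat \<Rightarrow> qs" where "P2 K = (\<Prod>j<K. 1 - fps_X ^ (2 * j + 2))"
definition Qp :: "nat \<Rightarrow> qs" where "Qp K = (\<Prod>j<K. 1 + fps_X ^ Suc j)"
definition Op :: "nat \<Rightarrow> qs" where "Op K = (\<Prod>j<K. 1 - fps_X ^ (2 * j + 1))"

lemma P2_eq: "P2 K = Qp K * P1 K"
proof -
  have e: "(1 - fps_X ^ (2 * j + 2) :: qs) = (1 + fps_X ^ Suc j) * (1 - fps_X ^ Suc j)" for j
  proof -
    have "(fps_X ^ Suc j * fps_X ^ Suc j :: qs) = fps_X ^ (2 * j + 2)"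
      by (simp only: power_add[symmetric]) simp
    then show ?thesis by (simp add: algebra_simps)
  qed
  have "P2 K = (\<Prod>j<K. (1 + fps_X ^ Suc j) * (1 - fps_X ^ Suc j))"
    unfolding P2_def by (rule prod.cong[OF refl e])
  then show ?thesis unfolding Qp_def P1_def prod.distrib by simp
qed

lemma P1_double: "P1 (2 * K) = Op K * P2 K"
proof (induction K)
  case 0 then show ?case by (simp add: P1_def Op_def P2_def)
next
  case (Suc K)
  have "P1 (2 * Suc K) = P1 (2 * K) * (1 - fps_X ^ (2 * K + 1)) * (1 - fps_X ^ (2 * K + 2))"
    by (simp add: P1_def)
  also have "\<dots> = Op (Suc K) * P2 (Suc K)" using Suc by (simp add: Op_def P2_def algebra_simps)
  finally show ?case .
qed

lemma P1_0 [simp]: "P1 K $ 0 = 1" by (simp add: P1_def prod_nth_0)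
lemma P2_0 [simp]: "P2 K $ 0 = 1" by (simp add: P2_def prod_nth_0)

lemma P1_stable: "n < N \<Longrightarrow> n < M \<Longrightarrow> eqn n (P1 N) (P1 M)"
  unfolding P1_def by (rule prod_stable_eqn) auto

lemma nonzero_of_nth0: "(f :: qs) $ 0 = 1 \<Longrightarrow> f \<noteq> 0"
  by auto

lemma Kf_0 [simp]: "Kf a $ 0 = 0" by (simp add: Kf_nth)
lemma Kf_small: "t < a \<Longrightarrow> Kf a $ t = 0" by (auto simp: Kf_nth dest: dvd_imp_le)

lemma sum_trunc:
  fixes g :: "nat \<Rightarrow> qs"
  assumes "\<And>k t. n < k \<Longrightarrow> t \<le> n \<Longrightarrow> g k $ t = 0" "n \<le> A" "n \<le> B"
  shows "eqn n (\<Sum>k\<in>{1..A}. g k) (\<Sum>k\<in>{1..B}. g k)"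
proof -
  have "(\<Sum>k\<in>{1..M}. g k) $ t = (\<Sum>k\<in>{1..n}. g k $ t)" if "n \<le> M" "t \<le> n" for M t
    unfolding fps_sum_nth by (rule sum.mono_neutral_right) (use that assms(1) in auto)
  then show ?thesis using assms by (simp add: eqn_def)
qed

lemma divisor_sym:
  assumes "0 < s" "s \<le> L"
  shows "(\<Sum>k\<in>{1..L}. if k dvd s then of_nat k else 0) = (\<Sum>k\<in>{1..L}. if k dvd s then of_nat s / of_nat k else (0::rat))"
proof -
  define Dv where "Dv = {k. k dvd s}"
  have Dv: "Dv \<subseteq> {1..L}"
  proof
    fix x assume "x \<in> Dv"
    then have x: "x dvd s" by (simp add: Dv_def)
    have "x \<le> s" by (rule dvd_imp_le[OF x assms(1)])
    moreover have "x \<noteq> 0" using x assms(1) by auto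
    ultimately show "x \<in> {1..L}" using assms(2) by auto
  qed
  have fin: "finite Dv" using Dv finite_subset by blast
  have l: "(\<Sum>k\<in>{1..L}. if k dvd s then of_nat k else 0) = (\<Sum>k\<in>Dv. of_nat k :: rat)"
    using Dv by (simp add: sum.If_cases Dv_def Int_absorb1 Int_commute)
  have r: "(\<Sum>k\<in>{1..L}. if k dvd s then of_nat s / of_nat k else 0) = (\<Sum>k\<in>Dv. of_nat s / of_nat k :: rat)"
    using Dv by (simp add: sum.If_cases Dv_def Int_absorb1 Int_commute)
  have inv: "s div (s div k) = k \<and> s div k \<in> Dv \<and> of_nat s / of_nat (s div k) = (of_nat k :: rat)"
    if "k \<in> Dv" for k
  proof -
    have "k dvd s" "0 < k" using that assms by (auto simp: Dv_def intro: Nat.gr0I)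
    then obtain m where m: "s = k * m" by (auto elim!: dvdE)
    then have "0 < m" using assms(1) by (cases m) auto
    then show ?thesis using m \<open>0 < k\<close> by (auto simp: Dv_def)
  qed
  have "(\<Sum>k\<in>Dv. of_nat k :: rat) = (\<Sum>k\<in>Dv. of_nat s / of_nat k)"
    by (rule sum.reindex_bij_witness[where i = "\<lambda>k. s div k" and j = "\<lambda>k. s div k"]) (use inv in auto)
  then show ?thesis using l r by simp
qed


lemma Eh_one_minus: "Fin w \<Longrightarrow> Eh (1 - w) = 1 - Eh w" by simp

lemma EPA: "Eh (PA n) = P2 (Suc n)"
  unfolding PA_def P2_def
  by (subst Eh_prod) (auto simp: power_add[symmetric] add.commute intro!: prod.cong)

lemma EPB: "Eh (PB n) = P1 (2 * Suc n) * P1 (2 * Suc n)"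
  unfolding PB_def P1_def
  by (subst Eh_mult; (subst Eh_prod)?) (auto simp: Eh_prod intro!: prod.cong)

lemma EPA2: "Eh (PA2 n) = Qp (Suc n) * P2 (Suc n)"
  unfolding PA2_def P2_def Qp_def
  by (subst Eh_mult) (auto simp: Eh_prod power_add[symmetric] add.commute intro!: prod.cong)

lemma EPC2: "Eh (PC2 n) = Op (Suc n)"
  unfolding PC2_def Op_def
  by (auto simp: Eh_prod add.commute intro!: prod.cong)

lemma EPB2: "Eh (PB2 n) = Op (Suc n) * P2 (Suc n) * P2 (Suc n)"
proof -
  have F: "Fin (PC2 n)" by (simp add: PC2_def)
  show ?thesis unfolding PB2_def
    apply (subst Eh_mult, simp add: F, simp)+
    apply (simp add: EPC2 P2_def Eh_prod power_add[symmetric] add.commute)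
    done
qed


definition GM :: "nat \<Rightarrow> qs" where "GM n = Eh (PA n / PB n)"
definition GM2 :: "nat \<Rightarrow> qs" where "GM2 n = Eh (PA2 n / PB2 n)"

lemma GM_rel: "GM n * (P1 (2 * Suc n) * P1 (2 * Suc n)) = P2 (Suc n)"
  using crank_M[of n] by (simp add: GM_def EPA EPB)

lemma GM2_rel: "GM2 n * (Op (Suc n) * P2 (Suc n) * P2 (Suc n)) = Qp (Suc n) * P2 (Suc n)"
  using crank_M2[of n] by (simp add: GM2_def EPA2 EPB2)

lemma GM_GM2: "eqn n (GM n) (GM2 n)"
proof -
  define N where "N = Suc n"
  have P2nz: "P2 N \<noteq> 0" by (rule nonzero_of_nth0) simp
  have P1nz: "P1 (2 * N) \<noteq> 0" by (rule nonzero_of_nth0) simp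
  have "(GM2 n * Op N * P2 N) * P2 N = Qp N * P2 N"
    using GM2_rel[of n] by (simp add: N_def mult.assoc)
  then have a: "GM2 n * Op N * P2 N = Qp N" using P2nz by simp
  then have b: "GM2 n * P1 (2 * N) = Qp N" by (simp add: P1_double mult.assoc)
  have "(GM n * P1 (2 * N)) * P1 (2 * N) = Qp N * P1 N"
    using GM_rel[of n] by (simp add: N_def P2_eq mult.assoc)
  also have "\<dots> = (GM2 n * P1 N) * P1 (2 * N)" using b by (simp add: algebra_simps)
  finally have c: "GM n * P1 (2 * N) = GM2 n * P1 N" using P1nz by simp
  have "eqn n (GM n * P1 N) (GM n * P1 (2 * N))"
    by (rule eqn_mult[OF eqn_refl P1_stable]) (simp_all add: N_def)
  then have "eqn n (GM n * P1 N) (GM2 n * P1 N)" using c by simp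
  then show ?thesis by (rule eqn_cancel) simp
qed

definition CC :: "nat \<Rightarrow> qs" where
  "CC n = 2 * (\<Sum>j<2 * Suc n. of_nat (Suc j) * Kf (Suc j)) - (\<Sum>j<Suc n. of_nat (2 * j + 2) * Kf (2 * j + 2))"

lemma GM_D: "Dq (GM n) = GM n * CC n"
proof -
  define N where "N = Suc n"
  define L1 where "L1 = (\<Sum>j<2 * N. of_nat (Suc j) * Kf (Suc j) :: qs)"
  define L2 where "L2 = (\<Sum>j<N. of_nat (2 * j + 2) * Kf (2 * j + 2) :: qs)"
  have d1: "Dq (P1 (2 * N)) = - P1 (2 * N) * L1"
    unfolding P1_def L1_def by (rule logD) simp
  have d2: "Dq (P2 N) = - P2 N * L2"
    unfolding P2_def L2_def by (rule logD) simp
  define EB where "EB = P1 (2 * N) * P1 (2 * N)"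
  have rel: "GM n * EB = P2 N" using GM_rel[of n] by (simp add: EB_def N_def)
  have "Dq EB = Dq (P1 (2 * N)) * P1 (2 * N) + P1 (2 * N) * Dq (P1 (2 * N))" by (simp add: EB_def Dq_mult)
  also have "\<dots> = - P1 (2 * N) * L1 * P1 (2 * N) + P1 (2 * N) * (- P1 (2 * N) * L1)" by (simp only: d1)
  finally have dEB: "Dq EB = - 2 * EB * L1" unfolding EB_def by (simp add: algebra_simps)
  have "Dq (GM n * EB) = Dq (GM n) * EB + GM n * Dq EB" by (rule Dq_mult)
  moreover have "Dq (GM n * EB) = Dq (P2 N)" by (simp only: rel)
  ultimately have e: "Dq (GM n) * EB + GM n * Dq EB = Dq (P2 N)" by simp
  then have "Dq (GM n) * EB + GM n * (- 2 * EB * L1) = - P2 N * L2" by (simp only: dEB d2)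
  then have "Dq (GM n) * EB + GM n * (- 2 * EB * L1) = - (GM n * EB) * L2" by (simp only: rel)
  then have "EB * (Dq (GM n) - GM n * (2 * L1 - L2)) = 0" by (simp add: algebra_simps)
  moreover have "EB \<noteq> 0" unfolding EB_def by (rule nonzero_of_nth0) simp
  ultimately have "Dq (GM n) = GM n * (2 * L1 - L2)" by simp
  then show ?thesis by (simp add: CC_def L1_def L2_def N_def)
qed

lemma GM_0: "GM n $ 0 = 1"
proof -
  have "(GM n * (P1 (2 * Suc n) * P1 (2 * Suc n))) $ 0 = P2 (Suc n) $ 0" using GM_rel by simp
  then show ?thesis by simp
qed

lemma CC_0: "CC n $ 0 = 0"
  by (simp add: CC_def fps_sum_nth)


abbreviation OPS where "OPS \<equiv> overpartitions"
definition op :: "nat \<Rightarrow> nat" where "op n = card (OPS n)"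

lemma OPS_iff: "(p, S) \<in> OPS n \<longleftrightarrow> (\<forall>x\<in>#p. 0 < x) \<and> sum_mset p = n \<and> S \<subseteq> set_mset p"
  by (simp add: overpartitions_def)

lemma mem_le_sum_mset: "x \<in># (p :: nat multiset) \<Longrightarrow> x \<le> sum_mset p"
  using sum_mset.remove[of x p] by simp

lemma size_le_sum_mset: "(\<forall>x\<in>#p. 0 < x) \<Longrightarrow> size p \<le> sum_mset (p :: nat multiset)"
proof (induction p)
  case empty then show ?case by simp
next
  case (add x p)
  then show ?case by auto
qed

lemma OPS_set: "(p, S) \<in> OPS n \<Longrightarrow> set_mset p \<subseteq> {1..n}"
  by (auto simp: OPS_iff Suc_le_eq mem_le_sum_mset)

lemma OPS_finite: "finite (OPS n)"
proof (rule finite_subset)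
  show "OPS n \<subseteq> (\<Union>s\<in>{0..n}. multisets_of_size {1..n} s) \<times> Pow {1..n}"
  proof
    fix x assume x: "x \<in> OPS n"
    obtain p S where [simp]: "x = (p, S)" by (cases x)
    have "set_mset p \<subseteq> {1..n}" using x OPS_set by simp
    moreover have "size p \<le> n" using x size_le_sum_mset[of p] by (simp add: OPS_iff)
    moreover have "S \<subseteq> {1..n}" using x OPS_set[of p S n] by (auto simp: OPS_iff)
    ultimately show "x \<in> (\<Union>s\<in>{0..n}. multisets_of_size {1..n} s) \<times> Pow {1..n}"
      by (auto simp: multisets_of_size_def)
  qed
qed auto

lemma sum_mset_count:
  assumes "finite A" "set_mset p \<subseteq> A"
  shows "sum_mset (p :: nat multiset) = (\<Sum>k\<in>A. k * count p k)"
  using assms(2)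
proof (induction p)
  case empty then show ?case by simp
next
  case (add x p)
  then have x: "x \<in> A" and IH: "sum_mset p = (\<Sum>k\<in>A. k * count p k)" by auto
  have "(\<Sum>k\<in>A. k * count (add_mset x p) k) = (\<Sum>k\<in>A. k * count p k + (if k = x then k else 0))"
    by (rule sum.cong) auto
  also have "\<dots> = (\<Sum>k\<in>A. k * count p k) + x" using x assms(1) by (simp add: sum.distrib)
  finally show ?case using IH by simp
qed

definition ovl :: "nat \<Rightarrow> nat \<Rightarrow> nat" where
  "ovl k n = card {x \<in> OPS n. k \<in> snd x}"

lemma ovl_big: "n < k \<Longrightarrow> ovl k n = 0"
proof -
  assume "n < k"
  have eq: "{x \<in> OPS n. k \<in> snd x} = {}"
  proof safe
    fix p S assume "(p, S) \<in> OPS n" "k \<in> snd (p, S)"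
    then have "k \<in># p" by (auto simp: OPS_iff)
    then have "k \<le> n" using \<open>(p, S) \<in> OPS n\<close> mem_le_sum_mset by (auto simp: OPS_iff)
    then show "(p, S) \<in> {}" using \<open>n < k\<close> by simp
  qed
  show ?thesis unfolding ovl_def eq by simp
qed

lemma card_split_filter: "finite A \<Longrightarrow> card {x\<in>A. P x} + card {x\<in>A. \<not> P x} = card A"
  by (subst card_Un_disjoint[symmetric]) (auto intro: arg_cong[where f = card])

lemma ovl_rec:
  assumes "0 < k" "k \<le> n"
  shows "ovl k n + ovl k (n - k) = op (n - k)"
proof -
  define f where "f = (\<lambda>(p :: nat multiset, S :: nat set). (p - {#k#}, S - {k}))"
  define g where "g = (\<lambda>(p :: nat multiset, S :: nat set). (add_mset k p, insert k S))"
  have "bij_betw f {x \<in> OPS n. k \<in> snd x} {y \<in> OPS (n - k). k \<notin> snd y}"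
  proof (rule bij_betw_byWitness[where f' = g])
    show "\<forall>a\<in>{x \<in> OPS n. k \<in> snd x}. g (f a) = a"
    proof
      fix a assume "a \<in> {x \<in> OPS n. k \<in> snd x}"
      then obtain p S where a: "a = (p, S)" "(p, S) \<in> OPS n" "k \<in> S" by (cases a) auto
      then have "k \<in># p" by (auto simp: OPS_iff)
      then show "g (f a) = a" using a by (auto simp: f_def g_def)
    qed
    show "\<forall>a\<in>{y \<in> OPS (n - k). k \<notin> snd y}. f (g a) = a"
      by (auto simp: f_def g_def)
    show "f ` {x \<in> OPS n. k \<in> snd x} \<subseteq> {y \<in> OPS (n - k). k \<notin> snd y}"
    proof
      fix y assume "y \<in> f ` {x \<in> OPS n. k \<in> snd x}"
      then obtain p S where a: "(p, S) \<in> OPS n" "k \<in> S" "y = f (p, S)" by auto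
      then have kp: "k \<in># p" by (auto simp: OPS_iff)
      then obtain p' where p': "p = add_mset k p'" by (metis insert_DiffM)
      have "f (p, S) \<in> OPS (n - k)" using a p' by (auto simp: f_def OPS_iff)
      then show "y \<in> {y \<in> OPS (n - k). k \<notin> snd y}" using a by (simp add: f_def)
    qed
    show "g ` {y \<in> OPS (n - k). k \<notin> snd y} \<subseteq> {x \<in> OPS n. k \<in> snd x}"
      using assms by (auto simp: g_def OPS_iff)
  qed
  then have "ovl k n = card {y \<in> OPS (n - k). k \<notin> snd y}"
    unfolding ovl_def by (rule bij_betw_same_card)
  then show ?thesis
    using card_split_filter[OF OPS_finite[of "n - k"], of "\<lambda>y. k \<in> snd y"]
    by (simp add: ovl_def op_def)
qed

definition cnt :: "nat multiset \<times> nat set \<Rightarrow> nat \<Rightarrow> nat" where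
  "cnt x k = count (fst x) k - (if k \<in> snd x then 1 else 0)"

definition bcnt :: "nat \<Rightarrow> nat \<Rightarrow> nat" where
  "bcnt k n = (\<Sum>x\<in>OPS n. cnt x k)"

lemma bcnt_big: "n < k \<Longrightarrow> bcnt k n = 0"
proof -
  assume "n < k"
  have "cnt x k = 0" if "x \<in> OPS n" for x
  proof -
    obtain p S where x: "x = (p, S)" by (cases x)
    have "k \<notin># p" using that \<open>n < k\<close> OPS_set[of p S n] x by auto
    moreover have "k \<notin> S" using calculation that x by (auto simp: OPS_iff)
    ultimately show ?thesis by (simp add: cnt_def x not_in_iff)
  qed
  then show ?thesis by (simp add: bcnt_def)
qed

lemma bcnt_rec:
  assumes "0 < k" "k \<le> n"
  shows "bcnt k n = bcnt k (n - k) + op (n - k)"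
proof -
  define g where "g = (\<lambda>(p :: nat multiset, S :: nat set). (add_mset k p, S))"
  define f where "f = (\<lambda>(p :: nat multiset, S :: nat set). (p - {#k#}, S))"
  have cg: "cnt (g y) k = cnt y k + 1" if "y \<in> OPS (n - k)" for y
  proof -
    obtain p S where y: "y = (p, S)" by (cases y)
    have "k \<in> S \<Longrightarrow> k \<in># p" using that y by (auto simp: OPS_iff)
    then show ?thesis by (auto simp: cnt_def g_def y)
  qed
  have bij: "bij_betw g (OPS (n - k)) {x \<in> OPS n. 1 \<le> cnt x k}"
  proof (rule bij_betw_byWitness[where f' = f])
    show "\<forall>a\<in>OPS (n - k). f (g a) = a" by (auto simp: f_def g_def)
    show "\<forall>a\<in>{x \<in> OPS n. 1 \<le> cnt x k}. g (f a) = a"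
    proof
      fix a assume "a \<in> {x \<in> OPS n. 1 \<le> cnt x k}"
      then obtain p S where a: "a = (p, S)" "1 \<le> cnt (p, S) k" by (cases a) auto
      have "count p k \<noteq> 0"
      proof
        assume "count p k = 0" then show False using a(2) by (simp add: cnt_def)
      qed
      then have "k \<in># p" by (metis count_eq_zero_iff)
      then show "g (f a) = a" using a by (auto simp: f_def g_def)
    qed
    show "g ` OPS (n - k) \<subseteq> {x \<in> OPS n. 1 \<le> cnt x k}"
    proof
      fix x assume "x \<in> g ` OPS (n - k)"
      then obtain p S where a: "(p, S) \<in> OPS (n - k)" "x = g (p, S)" by auto
      have "g (p, S) \<in> OPS n" using a assms by (auto simp: g_def OPS_iff)
      moreover have "1 \<le> cnt (g (p, S)) k" using cg[OF a(1)] by simp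
      ultimately show "x \<in> {x \<in> OPS n. 1 \<le> cnt x k}" using a by simp
    qed
    show "f ` {x \<in> OPS n. 1 \<le> cnt x k} \<subseteq> OPS (n - k)"
    proof
      fix y assume "y \<in> f ` {x \<in> OPS n. 1 \<le> cnt x k}"
      then obtain p S where a: "(p, S) \<in> OPS n" "1 \<le> cnt (p, S) k" "y = f (p, S)" by auto
      then have c: "count p k \<ge> 1 + (if k \<in> S then 1 else 0)" by (auto simp: cnt_def split: if_splits)
      have "count p k \<noteq> 0" using c by auto
      then have kp: "k \<in># p" by (metis count_eq_zero_iff)
      then obtain p' where p': "p = add_mset k p'" by (metis insert_DiffM)
      have "S \<subseteq> set_mset p'"
      proof
        fix s assume "s \<in> S"
        show "s \<in># p'"
        proof (cases "s = k")
          case True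
          have "count p' k \<noteq> 0" using c p' True \<open>s \<in> S\<close> by auto
          then show ?thesis using True by (metis count_eq_zero_iff)
        next
          case False then show ?thesis using a(1) p' \<open>s \<in> S\<close> by (auto simp: OPS_iff)
        qed
      qed
      then show "y \<in> OPS (n - k)" using a p' by (auto simp: f_def OPS_iff)
    qed
  qed
  have "bcnt k n = (\<Sum>x\<in>{x \<in> OPS n. 1 \<le> cnt x k}. cnt x k)"
    unfolding bcnt_def by (rule sum.mono_neutral_right) (auto simp: OPS_finite)
  also have "\<dots> = (\<Sum>y\<in>OPS (n - k). cnt (g y) k)"
    using sum.reindex_bij_betw[OF bij, of "\<lambda>x. cnt x k"] by simp
  also have "\<dots> = (\<Sum>y\<in>OPS (n - k). cnt y k + 1)" by (rule sum.cong) (auto simp: cg)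
  also have "\<dots> = bcnt k (n - k) + op (n - k)" by (simp only: sum.distrib bcnt_def op_def card_eq_sum)
  finally show ?thesis .
qed

lemma sum_S: "finite A \<Longrightarrow> S \<subseteq> A \<Longrightarrow> \<Sum>S = (\<Sum>k\<in>A. k * (if k \<in> S then 1 else 0 :: nat))"
  by (simp add: sum.inter_restrict[symmetric] Int_absorb1 if_distrib cong: if_cong)

lemma part_diff:
  assumes "(p, S) \<in> OPS n"
  shows "sum_mset p - \<Sum>S = (\<Sum>k\<in>{1..n}. k * cnt (p, S) k)"
proof -
  have sp: "set_mset p \<subseteq> {1..n}" using OPS_set[OF assms] .
  have Sp: "S \<subseteq> {1..n}" using assms sp by (auto simp: OPS_iff)
  have le: "k * (if k \<in> S then 1 else 0) \<le> k * count p k" for k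
    using assms by (auto simp: OPS_iff)
  have "sum_mset p - \<Sum>S = (\<Sum>k\<in>{1..n}. k * count p k) - (\<Sum>k\<in>{1..n}. k * (if k \<in> S then 1 else 0))"
    using sum_mset_count[OF _ sp] sum_S[OF _ Sp] by simp
  also have "\<dots> = (\<Sum>k\<in>{1..n}. k * count p k - k * (if k \<in> S then 1 else 0))"
    by (rule sum_subtractf_nat[symmetric]) (use le in auto)
  also have "\<dots> = (\<Sum>k\<in>{1..n}. k * cnt (p, S) k)"
    by (rule sum.cong) (auto simp: cnt_def diff_mult_distrib2)
  finally show ?thesis .
qed

lemma nov_sum: "nov n = (\<Sum>k\<in>{1..n}. k * bcnt k n)"
proof -
  have "nov n = (\<Sum>x\<in>OPS n. \<Sum>k\<in>{1..n}. k * cnt x k)"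
    unfolding nov_def by (rule sum.cong) (auto simp: part_diff)
  also have "\<dots> = (\<Sum>k\<in>{1..n}. k * bcnt k n)"
    by (subst sum.swap) (simp add: bcnt_def sum_distrib_left)
  finally show ?thesis .
qed

lemma ov_sum: "ov n = (\<Sum>k\<in>{1..n}. k * ovl k n)"
proof -
  have "ov n = (\<Sum>x\<in>OPS n. \<Sum>k\<in>{1..n}. k * (if k \<in> snd x then 1 else 0))"
    unfolding ov_def
  proof (rule sum.cong)
    fix x assume "x \<in> OPS n"
    then obtain p S where x: "x = (p, S)" "(p, S) \<in> OPS n" by (cases x) auto
    then have "S \<subseteq> {1..n}" using OPS_set[OF x(2)] by (auto simp: OPS_iff)
    then show "(case x of (p, S) \<Rightarrow> \<Sum>S) = (\<Sum>k\<in>{1..n}. k * (if k \<in> snd x then 1 else 0))"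
      using sum_S[of "{1..n}" S] x by simp
  qed simp
  also have "\<dots> = (\<Sum>k\<in>{1..n}. k * card {x \<in> OPS n. k \<in> snd x})"
    by (subst sum.swap) (simp add: sum_distrib_left[symmetric] OPS_finite sum.If_cases Int_def)
  finally show ?thesis by (simp add: ovl_def)
qed

lemma nov_ov: "nov n + ov n = n * op n"
proof -
  have "nov n + ov n = (\<Sum>x\<in>OPS n. (case x of (p, S) \<Rightarrow> sum_mset p - \<Sum>S) + (case x of (p, S) \<Rightarrow> \<Sum>S))"
    by (simp add: nov_def ov_def sum.distrib)
  also have "\<dots> = (\<Sum>x\<in>OPS n. n)"
  proof (rule sum.cong)
    fix x assume "x \<in> OPS n"
    then obtain p S where x: "x = (p, S)" "(p, S) \<in> OPS n" by (cases x) auto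
    have "\<Sum>S \<le> sum_mset p"
    proof -
      have Sp: "S \<subseteq> set_mset p" using x(2) by (simp add: OPS_iff)
      then have "\<And>k. k \<in> S \<Longrightarrow> 0 < count p k" by auto
      then have "\<And>k. k * (if k \<in> S then 1 else 0) \<le> k * count p k" by (simp add: Suc_le_eq)
      then have "\<Sum>S \<le> (\<Sum>k\<in>{1..n}. k * count p k)"
        using sum_S[of "{1..n}" S] OPS_set[OF x(2)] Sp
        by (simp add: sum_mono)
      then show ?thesis using sum_mset_count[OF _ OPS_set[OF x(2)]] by simp
    qed
    then show "(case x of (p, S) \<Rightarrow> sum_mset p - \<Sum>S) + (case x of (p, S) \<Rightarrow> \<Sum>S) = n"
      using x by (simp add: OPS_iff)
  qed simp
  finally show ?thesis by (simp add: op_def)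
qed


lemma of_nat_mult_nth [simp]: "(of_nat c * (F :: qs)) $ t = of_nat c * F $ t"
  by (simp flip: fps_of_nat)
lemma numeral_mult_nth [simp]: "(numeral c * (F :: qs)) $ t = numeral c * F $ t"
  by (simp add: fps_numeral_fps_const)

definition OP :: qs where "OP = Abs_fps (\<lambda>n. of_nat (op n))"
definition BC :: "nat \<Rightarrow> qs" where "BC k = Abs_fps (\<lambda>n. of_nat (bcnt k n))"
definition OVL :: "nat \<Rightarrow> qs" where "OVL k = Abs_fps (\<lambda>n. of_nat (ovl k n))"
definition NOVf :: qs where "NOVf = Abs_fps (\<lambda>n. of_nat (nov n))"
definition OVf :: qs where "OVf = Abs_fps (\<lambda>n. of_nat (ov n))"

lemma op_0: "op 0 = 1"
proof -
  have "OPS 0 = {({#}, {})}"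
  proof (rule set_eqI)
    fix x :: "nat multiset \<times> nat set"
    obtain p S where x: "x = (p, S)" by (cases x)
    have "(p, S) \<in> OPS 0 \<longleftrightarrow> p = {#} \<and> S = {}"
    proof
      assume a: "(p, S) \<in> OPS 0"
      have "p = {#}"
      proof (rule ccontr)
        assume "p \<noteq> {#}"
        then obtain y where "y \<in># p" by blast
        then have "y \<le> 0" "0 < y" using a mem_le_sum_mset[of y p] by (auto simp: OPS_iff)
        then show False by simp
      qed
      then show "p = {#} \<and> S = {}" using a by (auto simp: OPS_iff)
    qed (simp add: OPS_iff)
    then show "x \<in> OPS 0 \<longleftrightarrow> x \<in> {({#}, {})}" by (simp add: x)
  qed
  then show ?thesis by (simp add: op_def)
qed

lemma OP_0 [simp]: "OP $ 0 = 1" by (simp add: OP_def op_0)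

lemma BC_rec: assumes "0 < k" shows "BC k = fps_X ^ k * (BC k + OP)"
proof (rule fps_ext)
  fix t show "BC k $ t = (fps_X ^ k * (BC k + OP)) $ t"
  proof (cases "t < k")
    case True then show ?thesis by (simp add: BC_def fps_X_power_mult_nth bcnt_big)
  next
    case False then show ?thesis using bcnt_rec[OF assms, of t] by (simp add: BC_def OP_def fps_X_power_mult_nth)
  qed
qed

lemma OVL_rec: assumes "0 < k" shows "OVL k = fps_X ^ k * (OP - OVL k)"
proof (rule fps_ext)
  fix t show "OVL k $ t = (fps_X ^ k * (OP - OVL k)) $ t"
  proof (cases "t < k")
    case True then show ?thesis by (simp add: OVL_def fps_X_power_mult_nth ovl_big)
  next
    case False
    have "of_nat (ovl k t) + of_nat (ovl k (t - k)) = (of_nat (op (t - k)) :: rat)"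
      using ovl_rec[OF assms, of t] False by (metis not_less of_nat_add)
    then show ?thesis using False by (simp add: OVL_def OP_def fps_X_power_mult_nth algebra_simps)
  qed
qed

lemma one_minus_X_nz: "0 < k \<Longrightarrow> (1 - fps_X ^ k :: qs) \<noteq> 0"
  by (rule nonzero_of_nth0) simp
lemma one_plus_X_nz: "0 < k \<Longrightarrow> (1 + fps_X ^ k :: qs) \<noteq> 0"
  by (rule nonzero_of_nth0) simp

lemma BC_eq: assumes "0 < k" shows "BC k = OP * Kf k"
proof -
  have "BC k * (1 - fps_X ^ k) = fps_X ^ k * OP"
    using BC_rec[OF assms] by (simp add: algebra_simps)
  also have "\<dots> = OP * Kf k * (1 - fps_X ^ k)" by (subst mult.assoc, subst Kf_eq[OF assms], rule mult.commute)
  finally show ?thesis using one_minus_X_nz[OF assms] by simp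
qed

lemma Kf_alt: assumes "0 < k" shows "(Kf k - 2 * Kf (2 * k)) * (1 + fps_X ^ k) = fps_X ^ k"
proof -
  have XX: "(fps_X ^ k * fps_X ^ k :: qs) = fps_X ^ (2 * k)" by (simp add: power_add[symmetric] mult_2)
  have k1: "Kf k * (1 - fps_X ^ k) = fps_X ^ k" by (rule Kf_eq[OF assms])
  have k2: "Kf (2 * k) * (1 - fps_X ^ (2 * k)) = fps_X ^ (2 * k)" by (rule Kf_eq) (use assms in simp)
  have "(Kf k - 2 * Kf (2 * k)) * (1 + fps_X ^ k) * (1 - fps_X ^ k)
      = Kf k * (1 - fps_X ^ k) * (1 + fps_X ^ k) - 2 * (Kf (2 * k) * (1 - fps_X ^ k * fps_X ^ k))"
    by (simp add: algebra_simps)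
  also have "\<dots> = fps_X ^ k * (1 - fps_X ^ k)" unfolding k1 XX k2 by (simp add: algebra_simps XX)
  finally show ?thesis using one_minus_X_nz[OF assms] by simp
qed

lemma OVL_eq: assumes "0 < k" shows "OVL k = OP * (Kf k - 2 * Kf (2 * k))"
proof -
  have "OVL k * (1 + fps_X ^ k) = fps_X ^ k * OP"
    using OVL_rec[OF assms] by (simp add: algebra_simps)
  also have "\<dots> = OP * (Kf k - 2 * Kf (2 * k)) * (1 + fps_X ^ k)"
    by (subst mult.assoc, subst Kf_alt[OF assms], rule mult.commute)
  finally show ?thesis using one_plus_X_nz[OF assms] by simp
qed

lemma D_OP: "Dq OP = NOVf + OVf"
proof (rule fps_ext)
  fix n
  have "of_nat (n * op n) = (of_nat (nov n + ov n) :: rat)" by (simp only: nov_ov)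
  then show "Dq OP $ n = (NOVf + OVf) $ n" by (simp add: OP_def NOVf_def OVf_def)
qed

lemma NOV_eqn: assumes "n \<le> L" shows "eqn n NOVf (\<Sum>k\<in>{1..L}. of_nat k * BC k)"
  unfolding eqn_def
proof (intro allI impI)
  fix t assume "t \<le> n"
  have "NOVf $ t = (\<Sum>k\<in>{1..t}. of_nat k * of_nat (bcnt k t))" by (simp add: NOVf_def nov_sum)
  also have "\<dots> = (\<Sum>k\<in>{1..L}. of_nat k * of_nat (bcnt k t))"
    by (rule sum.mono_neutral_left) (use \<open>t \<le> n\<close> assms in \<open>auto simp: bcnt_big\<close>)
  also have "\<dots> = (\<Sum>k\<in>{1..L}. of_nat k * BC k) $ t" by (simp add: fps_sum_nth BC_def)
  finally show "NOVf $ t = (\<Sum>k\<in>{1..L}. of_nat k * BC k) $ t" .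
qed

lemma OV_eqn: assumes "n \<le> L" shows "eqn n OVf (\<Sum>k\<in>{1..L}. of_nat k * OVL k)"
  unfolding eqn_def
proof (intro allI impI)
  fix t assume "t \<le> n"
  have "OVf $ t = (\<Sum>k\<in>{1..t}. of_nat k * of_nat (ovl k t))" by (simp add: OVf_def ov_sum)
  also have "\<dots> = (\<Sum>k\<in>{1..L}. of_nat k * of_nat (ovl k t))"
    by (rule sum.mono_neutral_left) (use \<open>t \<le> n\<close> assms in \<open>auto simp: ovl_big\<close>)
  also have "\<dots> = (\<Sum>k\<in>{1..L}. of_nat k * OVL k) $ t" by (simp add: fps_sum_nth OVL_def)
  finally show "OVf $ t = (\<Sum>k\<in>{1..L}. of_nat k * OVL k) $ t" .
qed


definition CCg :: "nat \<Rightarrow> qs" where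
  "CCg L = (\<Sum>k\<in>{1..L}. of_nat k * (Kf k + (Kf k - 2 * Kf (2 * k))))"

lemma D_OP_eqn: assumes "n \<le> L" shows "eqn n (Dq OP) (OP * CCg L)"
proof -
  have "eqn n (Dq OP) ((\<Sum>k\<in>{1..L}. of_nat k * BC k) + (\<Sum>k\<in>{1..L}. of_nat k * OVL k))"
    unfolding D_OP by (intro eqn_add NOV_eqn OV_eqn assms)
  also have "(\<Sum>k\<in>{1..L}. of_nat k * BC k) + (\<Sum>k\<in>{1..L}. of_nat k * OVL k)
      = (\<Sum>k\<in>{1..L}. OP * (of_nat k * (Kf k + (Kf k - 2 * Kf (2 * k)))))"
    unfolding sum.distrib[symmetric]
  proof (rule sum.cong[OF refl])
    fix k assume "k \<in> {1..L}"
    then have k: "0 < k" by simp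
    show "of_nat k * BC k + of_nat k * OVL k = OP * (of_nat k * (Kf k + (Kf k - 2 * Kf (2 * k))))"
      by (simp add: BC_eq[OF k] OVL_eq[OF k] algebra_simps)
  qed
  also have "\<dots> = OP * CCg L" by (simp add: CCg_def sum_distrib_left)
  finally show ?thesis .
qed

lemma sumSuc1: "(\<Sum>j<M. of_nat (Suc j) * Kf (Suc j) :: qs) = (\<Sum>k\<in>{1..M}. of_nat k * Kf k)"
  by (rule sum_bounds_lt_plus1)
lemma sumSuc2: "(\<Sum>j<M. of_nat (2 * j + 2) * Kf (2 * j + 2) :: qs) = (\<Sum>k\<in>{1..M}. of_nat (2 * k) * Kf (2 * k))"
proof -
  have "(\<Sum>j<M. of_nat (2 * j + 2) * Kf (2 * j + 2) :: qs) = (\<Sum>j<M. of_nat (2 * Suc j) * Kf (2 * Suc j))"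
    by (rule sum.cong) simp_all
  also have "\<dots> = (\<Sum>k\<in>{1..M}. of_nat (2 * k) * Kf (2 * k))"
    by (rule sum_bounds_lt_plus1)
  finally show ?thesis .
qed

lemma CCg_alt: "CCg L = 2 * (\<Sum>k\<in>{1..L}. of_nat k * Kf k) - (\<Sum>k\<in>{1..L}. of_nat (2 * k) * Kf (2 * k))"
  unfolding CCg_def by (simp add: sum_distrib_left sum_subtractf[symmetric] algebra_simps)

lemma CC_eqn: assumes "J = 2 * Suc n" shows "eqn n (CC n) (CCg J)"
proof -
  have CC: "CC n = 2 * (\<Sum>k\<in>{1..J}. of_nat k * Kf k) - (\<Sum>k\<in>{1..Suc n}. of_nat (2 * k) * Kf (2 * k))"
    unfolding CC_def sumSuc1 sumSuc2 assms ..
  have "eqn n (\<Sum>k\<in>{1..Suc n}. of_nat (2 * k) * Kf (2 * k)) (\<Sum>k\<in>{1..J}. of_nat (2 * k) * Kf (2 * k) :: qs)"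
  proof (rule sum_trunc)
    fix k t :: nat assume "n < k" "t \<le> n"
    then have "Kf (2 * k) $ t = 0" by (intro Kf_small) simp
    then show "(of_nat (2 * k) * Kf (2 * k) :: qs) $ t = 0" by (simp only: of_nat_mult_nth mult_zero_right)
  qed (use assms in simp_all)
  then show ?thesis unfolding CC CCg_alt by (intro eqn_diff eqn_refl)
qed

lemma GM_OP: "eqn n (GM n) OP"
proof -
  have "n \<le> 2 * Suc n" by simp
  then show ?thesis
    by (intro unique_rec[OF eqn_eq[OF GM_D] D_OP_eqn CC_eqn[OF refl] CC_0]) (simp_all add: GM_0)
qed

lemma sum_dvd_range:
  fixes s L :: nat
  assumes "0 < s" "s \<le> L"
  shows "(\<Sum>k\<in>{1..L}. if k dvd s then f k else 0) = (\<Sum>k\<in>{1..s}. if k dvd s then f k else (0::rat))"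
proof (rule sum.mono_neutral_right)
  show "finite {1..L}" by simp
  show "{1..s} \<subseteq> {1..L}" using assms by auto
  show "\<forall>i\<in>{1..L} - {1..s}. (if i dvd s then f i else 0) = 0"
  proof
    fix i assume "i \<in> {1..L} - {1..s}"
    then have "\<not> i \<le> s" by auto
    then have "\<not> i dvd s" using dvd_imp_le[OF _ assms(1)] by blast
    then show "(if i dvd s then f i else 0) = 0" by simp
  qed
qed

lemma div_eq:
  fixes s L1 L2 :: nat
  assumes "0 < s" "s \<le> L1" "s \<le> L2"
  shows "(\<Sum>k\<in>{1..L1}. if k dvd s then of_nat k else 0) = (\<Sum>k\<in>{1..L2}. if k dvd s then of_nat s / of_nat k else (0::rat))"
  using divisor_sym[OF assms(1) order_refl] sum_dvd_range[OF assms(1) assms(2)] sum_dvd_range[OF assms(1) assms(3)]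
  by simp

definition K1 :: "nat \<Rightarrow> qs" where "K1 L = (\<Sum>k\<in>{1..L}. of_nat k * Kf k)"
definition K3 :: "nat \<Rightarrow> qs" where "K3 L = (\<Sum>k\<in>{1..L}. of_nat k * Kf (2 * k))"
definition SM :: "nat \<Rightarrow> qs" where "SM L = (\<Sum>j<L. Hs (Suc j))"
definition SM2 :: "nat \<Rightarrow> qs" where "SM2 L = (\<Sum>j<L. Hs (2 * j + 2))"

lemma K1_SM: assumes "n \<le> L" shows "eqn n (K1 L) (SM L)"
  unfolding eqn_def
proof (intro allI impI)
  fix t assume t: "t \<le> n"
  have l: "K1 L $ t = (\<Sum>k\<in>{1..L}. if k dvd t \<and> 0 < t then of_nat k else 0)"
    unfolding K1_def fps_sum_nth by (intro sum.cong) (simp_all add: Kf_nth)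
  have r: "SM L $ t = (\<Sum>k\<in>{1..L}. if k dvd t then of_nat t / of_nat k else 0)"
    unfolding SM_def fps_sum_nth sum_bounds_lt_plus1[of "\<lambda>k. Hs k $ t"] by (simp add: Hs_nth)
  show "K1 L $ t = SM L $ t"
  proof (cases "t = 0")
    case True then show ?thesis unfolding l r by simp
  next
    case False
    then show ?thesis unfolding l r using div_eq[of t L L] t assms by simp
  qed
qed

lemma K3_SM2: assumes "n < L1" "n < L2" shows "eqn n (K3 L1) (SM2 L2)"
  unfolding eqn_def
proof (intro allI impI)
  fix t assume t: "t \<le> n"
  have l: "K3 L1 $ t = (\<Sum>k\<in>{1..L1}. if 2 * k dvd t \<and> 0 < t then of_nat k else 0)"
    unfolding K3_def fps_sum_nth by (intro sum.cong) (simp_all add: Kf_nth)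
  have r: "SM2 L2 $ t = (\<Sum>k\<in>{1..L2}. if 2 * k dvd t then of_nat t / of_nat (2 * k) else 0)"
  proof -
    have "SM2 L2 $ t = (\<Sum>j<L2. Hs (2 * Suc j) $ t)" unfolding SM2_def fps_sum_nth
      by (rule sum.cong) simp_all
    also have "\<dots> = (\<Sum>k\<in>{1..L2}. Hs (2 * k) $ t)" by (rule sum_bounds_lt_plus1)
    finally show ?thesis by (simp add: Hs_nth)
  qed
  show "K3 L1 $ t = SM2 L2 $ t"
  proof (cases "even t \<and> 0 < t")
    case False
    have "(\<Sum>k\<in>{1..L1}. if 2 * k dvd t \<and> 0 < t then of_nat k else 0) = (0::rat)"
      by (rule sum.neutral) (use False in \<open>auto dest: dvd_mult_left\<close>)
    moreover have "(\<Sum>k\<in>{1..L2}. if 2 * k dvd t then of_nat t / of_nat (2 * k) else 0) = (0::rat)"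
      by (rule sum.neutral) (use False in \<open>auto dest: dvd_mult_left\<close>)
    ultimately show ?thesis unfolding l r by simp
  next
    case True
    then obtain s where s: "t = 2 * s" "0 < s" by (auto elim!: evenE)
    have l': "K3 L1 $ t = (\<Sum>k\<in>{1..L1}. if k dvd s then of_nat k else 0)"
      unfolding l using s by simp
    have r': "SM2 L2 $ t = (\<Sum>k\<in>{1..L2}. if k dvd s then of_nat s / of_nat k else 0)"
      unfolding r using s by (intro sum.cong) simp_all
    show ?thesis unfolding l' r' using div_eq[of s L1 L2] s t assms by simp
  qed
qed


lemma Mbar_2_eq: "Mbar_2 n = 2 * (GM n * SM (2 * Suc n)) $ n"
proof -
  have e: "GF_M $ n = (PA n / PB n) $ n" using GF_M_eqn[of n] by (simp add: eqn_def)
  have "Mbar_2 n = (\<Sum>m | (PA n / PB n) $ n $$ m \<noteq> 0. of_int m ^ 2 * (PA n / PB n) $ n $$ m)"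
    unfolding Mbar_2_def Mbar_def e ..
  also have "\<dots> = Eh (Th (Th (PA n / PB n))) $ n"
    using crank_M[of n] by (intro second_moment) simp
  also have "\<dots> = (2 * (GM n * SM (2 * Suc n))) $ n"
    using crank_M[of n] by (simp add: GM_def SM_def mult.assoc)
  also have "\<dots> = 2 * (GM n * SM (2 * Suc n)) $ n" by (rule numeral_mult_nth)
  finally show ?thesis .
qed

lemma M2bar_2_eq: "M2bar_2 n = 2 * (GM2 n * SM2 (Suc n)) $ n"
proof -
  have e: "GF_M2 $ n = (PA2 n / PB2 n) $ n" using GF_M2_eqn[of n] by (simp add: eqn_def)
  have "M2bar_2 n = (\<Sum>m | (PA2 n / PB2 n) $ n $$ m \<noteq> 0. of_int m ^ 2 * (PA2 n / PB2 n) $ n $$ m)"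
    unfolding M2bar_2_def M2bar_def e ..
  also have "\<dots> = Eh (Th (Th (PA2 n / PB2 n))) $ n"
    using crank_M2[of n] by (intro second_moment) simp
  also have "\<dots> = (2 * (GM2 n * SM2 (Suc n))) $ n"
    using crank_M2[of n] by (simp add: GM2_def SM2_def mult.assoc)
  also have "\<dots> = 2 * (GM2 n * SM2 (Suc n)) $ n" by (rule numeral_mult_nth)
  finally show ?thesis .
qed

lemma nov_eq: "of_nat (nov n) = (GM n * SM (2 * Suc n)) $ n"
proof -
  define J where "J = 2 * Suc n"
  have J: "n \<le> J" "n < J" by (simp_all add: J_def)
  have "of_nat (nov n) = NOVf $ n" by (simp add: NOVf_def)
  also have "\<dots> = (\<Sum>k\<in>{1..J}. of_nat k * BC k) $ n" using NOV_eqn[OF J(1)] by (simp add: eqn_def)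
  also have "(\<Sum>k\<in>{1..J}. of_nat k * BC k) = OP * K1 J"
    unfolding K1_def sum_distrib_left by (rule sum.cong) (auto simp: BC_eq algebra_simps)
  also have "(OP * K1 J) $ n = (GM n * SM J) $ n"
    using eqn_mult[OF eqn_sym[OF GM_OP] K1_SM[OF J(1)]] by (simp add: eqn_def)
  finally show ?thesis by (simp add: J_def)
qed

lemma ov_eq: "of_nat (ov n) = (GM n * SM (2 * Suc n)) $ n - 2 * (GM2 n * SM2 (Suc n)) $ n"
proof -
  define J where "J = 2 * Suc n"
  have J: "n \<le> J" "n < J" by (simp_all add: J_def)
  have "of_nat (ov n) = OVf $ n" by (simp add: OVf_def)
  also have "\<dots> = (\<Sum>k\<in>{1..J}. of_nat k * OVL k) $ n" using OV_eqn[OF J(1)] by (simp add: eqn_def)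
  also have "(\<Sum>k\<in>{1..J}. of_nat k * OVL k) = OP * K1 J - 2 * (OP * K3 J)"
    unfolding K1_def K3_def sum_distrib_left sum_subtractf[symmetric]
    by (rule sum.cong) (auto simp: OVL_eq algebra_simps)
  also have "eqn n (OP * K1 J - 2 * (OP * K3 J)) (GM n * SM J - 2 * (GM2 n * SM2 (Suc n)))"
  proof (rule eqn_diff)
    show "eqn n (OP * K1 J) (GM n * SM J)"
      by (rule eqn_mult[OF eqn_sym[OF GM_OP] K1_SM[OF J(1)]])
    have "eqn n OP (GM2 n)" by (rule eqn_trans[OF eqn_sym[OF GM_OP] GM_GM2])
    then show "eqn n (2 * (OP * K3 J)) (2 * (GM2 n * SM2 (Suc n)))"
      by (intro eqn_mult eqn_refl K3_SM2 J(2)) simp_all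
  qed
  then have "(OP * K1 J - 2 * (OP * K3 J)) $ n = (GM n * SM J - 2 * (GM2 n * SM2 (Suc n))) $ n"
    by (simp add: eqn_def)
  finally show ?thesis by (simp add: J_def)
qed

theorem proposition4p1:
  fixes n :: nat
  shows "of_nat (nov n) = Mbar_2 n / 2 \<and> of_nat (ov n) = Mbar_2 n / 2 - M2bar_2 n"
  using nov_eq[of n] ov_eq[of n] Mbar_2_eq[of n] M2bar_2_eq[of n] by simp


end
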